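(* (i) For any choice of fundamental sequences $\{\lambda\}$ and every ordinal $\alpha<\omega^2$, $\mathrm{rk}(T_{\tau_\alpha},p(x))=\alpha$. (ii) With the fundamental sequences defined via Cantor normal form below, $\mathrm{rk}(T_{\tau_\alpha},p(x))=\alpha$ for every ordinal $\alpha<\varepsilon_0$.
   Context: For a theory $S$ and set of formulas $p$: $(S)^p=\{\neg\exists\bar x\varphi(\bar x): S\models\forall\bar x(\varphi\to\psi)\text{ for all }\psi\in p\}$, $[S]^p$ is the first-order closure of $S+(S)^p$; $[T]^p_0$ is the closure of $T$, $[T]^p_{\alpha+1}=[[T]^p_\alpha]^p$, unions at limits, $[T]^p_\infty=\bigcup_\alpha[T]^p_\alpha$; $\mathrm{rk}(T,p)$ is the least $\alpha$ with $[T]^p_\alpha=[T]^p_\infty$. Trees: $\varepsilon$ is the empty sequence, $s^\frown t$ concatenation, $i$ also denotes $\langle i\rangle$. For each countable limit $\lambda$ fix a strictly increasing $\{\lambda\}:\omega\to\lambda$ cofinal in $\lambda$. Define $\tau_0=\{\varepsilon\}$, $\tau_{\alpha+1}=\{\varepsilon\}\cup\{i^\frown s:i\in\omega,s\in\tau_\alpha\}$, $\tau_\lambda=\{\varepsilon\}\cup\{i^\frown s:i\in\omega,s\in\tau_{\{\lambda\}(i)}\}$. For a well-founded tree $\tau$, $\mathrm{rk}_\tau(s)=\sup_i(\mathrm{rk}_\tau(s^\frown i)+1)$ if $s\in\tau$ and $-1$ otherwise. The language $\mathcal L_\tau$ has unary predicates $P_s$ ($s\in\tau$, $s\neq\varepsilon$)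 and $U_i$ ($i\in\omega$). $T_\tau$ consists of: $\neg\exists xP_{s^\frown i}(x)\to\forall x(P_s(x)\to U_i(x))$ for $s^\frown i\in\tau$, $s\ne\varepsilon$; $\forall x(P_s(x)\to U_i(x))$ for all $i$ and all $s$ with $\mathrm{rk}_\tau(s)=0$; and $\exists^{\ge i}x\bigwedge_{j\le i}U_j(x)$ for all $i$. $p(x)=\{U_i(x):i\in\omega\}$. Fundamental sequences for (ii): write $\lambda<\varepsilon_0$ (the least $\varepsilon$ with $\omega^\varepsilon=\varepsilon$) in Cantor normal form $\lambda=\omega^{\lambda_1}n_1+\dots+\omega^{\lambda_k}n_k$ with $n_j\ge1$, $\lambda>\lambda_1>\dots>\lambda_k\ge0$ ($\lambda$ limit iff $\lambda_k>0$). Set $\{\lambda\}(i)=\omega^{\lambda_1}n_1+\dots+\omega^{\lambda_k}(n_k-1)+\omega^{\{\lambda_k\}(i)}$ if $\lambda_k$ is a limit, and $\{\lambda\}(i)=\omega^{\lambda_1}n_1+\dots+\omega^{\lambda_k}(n_k-1)+\omega^{\xi}\cdot i$ if $\lambda_k=\xi+1$. *)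

theory Defs
  imports Main
begin

text \<open>OZ denotes 0, OP a b denotes omega^a + b. A notation is in normal form (nf)
  iff the exponents are weakly decreasing; normal-form notations are in
  order-preserving bijection with the ordinals below epsilon_0.
  (omega^a * n is written as n repeated summands omega^a.)\<close>

datatype ordn = OZ | OP ordn ordn

fun ord_lt :: "ordn \<Rightarrow> ordn \<Rightarrow> bool" where
  "ord_lt OZ OZ = False"
| "ord_lt OZ (OP _ _) = True"
| "ord_lt (OP _ _) OZ = False"
| "ord_lt (OP a b) (OP c d) = (ord_lt a c \<or> (a = c \<and> ord_lt b d))"

definition ord_le :: "ordn \<Rightarrow> ordn \<Rightarrow> bool" where
  "ord_le a b \<longleftrightarrow> a = b \<or> ord_lt a b"

fun nf :: "ordn \<Rightarrow> bool" where
  "nf OZ = True"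
| "nf (OP a b) = (nf a \<and> nf b \<and> (case b of OZ \<Rightarrow> True | OP c d \<Rightarrow> \<not> ord_lt a c))"

definition one :: ordn where "one = OP OZ OZ"
definition omega2 :: ordn where "omega2 = OP (OP OZ (OP OZ OZ)) OZ"

fun lastexp :: "ordn \<Rightarrow> ordn" where
  "lastexp OZ = OZ"
| "lastexp (OP a b) = (if b = OZ then a else lastexp b)"

fun opred :: "ordn \<Rightarrow> ordn" where
  "opred OZ = OZ"
| "opred (OP a b) = (if b = OZ then OZ else OP a (opred b))"

definition is_succ :: "ordn \<Rightarrow> bool" where
  "is_succ \<alpha> \<longleftrightarrow> \<alpha> \<noteq> OZ \<and> lastexp \<alpha> = OZ"

definition is_limit :: "ordn \<Rightarrow> bool" where
  "is_limit \<alpha> \<longleftrightarrow> \<alpha> \<noteq> OZ \<and> lastexp \<alpha> \<noteq> OZ"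

fun rep :: "nat \<Rightarrow> ordn \<Rightarrow> ordn \<Rightarrow> ordn" where
  "rep 0 x t = t"
| "rep (Suc n) x t = OP x (rep n x t)"

text \<open>The Cantor-normal-form fundamental sequences of part (ii): the last summand
  omega^(lambda_k) is replaced by omega^({lambda_k}(i)) if lambda_k is a limit and by
  omega^xi * i if lambda_k = xi + 1.\<close>
fun fs_cnf :: "ordn \<Rightarrow> nat \<Rightarrow> ordn" where
  "fs_cnf OZ i = OZ"
| "fs_cnf (OP a b) i =
     (if b = OZ then
        (if a = OZ then OZ
         else if lastexp a = OZ then rep i (opred a) OZ
         else OP (fs_cnf a i) OZ)
      else OP a (fs_cnf b i))"

definition valid_fs_below_omega2 :: "(ordn \<Rightarrow> nat \<Rightarrow> ordn) \<Rightarrow> bool" where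
  "valid_fs_below_omega2 f \<longleftrightarrow>
     (\<forall>l. nf l \<and> is_limit l \<and> ord_lt l omega2 \<longrightarrow>
        (\<forall>i. nf (f l i) \<and> ord_lt (f l i) l \<and> ord_lt (f l i) (f l (Suc i))) \<and>
        (\<forall>\<beta>. nf \<beta> \<and> ord_lt \<beta> l \<longrightarrow> (\<exists>i. ord_le \<beta> (f l i))))"

inductive in_tau :: "(ordn \<Rightarrow> nat \<Rightarrow> ordn) \<Rightarrow> ordn \<Rightarrow> nat list \<Rightarrow> bool" for f where
  root: "in_tau f \<alpha> []"
| succ: "is_succ \<alpha> \<Longrightarrow> in_tau f (opred \<alpha>) s \<Longrightarrow> in_tau f \<alpha> (i # s)"
| lim: "is_limit \<alpha> \<Longrightarrow> in_tau f (f \<alpha> i) s \<Longrightarrow> in_tau f \<alpha> (i # s)"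

definition tau :: "(ordn \<Rightarrow> nat \<Rightarrow> ordn) \<Rightarrow> ordn \<Rightarrow> nat list set" where
  "tau f \<alpha> = {s. in_tau f \<alpha> s}"

text \<open>rk_tau(s) = 0 unfolds to: s is in tau and has no child in tau.\<close>
definition rank0 :: "nat list set \<Rightarrow> nat list \<Rightarrow> bool" where
  "rank0 t s \<longleftrightarrow> s \<in> t \<and> (\<forall>i. s @ [i] \<notin> t)"

datatype psym = P "nat list" | U nat

datatype fm = FF | Atom psym nat | Eq nat nat | Neg fm | Conj fm fm | Disj fm fm
  | Imp fm fm | Ex nat fm | All nat fm

fun fv :: "fm \<Rightarrow> nat set" where
  "fv FF = {}"
| "fv (Atom _ v) = {v}"
| "fv (Eq u v) = {u, v}"
| "fv (Neg \<phi>) = fv \<phi>"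
| "fv (Conj \<phi> \<psi>) = fv \<phi> \<union> fv \<psi>"
| "fv (Disj \<phi> \<psi>) = fv \<phi> \<union> fv \<psi>"
| "fv (Imp \<phi> \<psi>) = fv \<phi> \<union> fv \<psi>"
| "fv (Ex v \<phi>) = fv \<phi> - {v}"
| "fv (All v \<phi>) = fv \<phi> - {v}"

fun preds :: "fm \<Rightarrow> psym set" where
  "preds FF = {}"
| "preds (Atom R _) = {R}"
| "preds (Eq _ _) = {}"
| "preds (Neg \<phi>) = preds \<phi>"
| "preds (Conj \<phi> \<psi>) = preds \<phi> \<union> preds \<psi>"
| "preds (Disj \<phi> \<psi>) = preds \<phi> \<union> preds \<psi>"
| "preds (Imp \<phi> \<psi>) = preds \<phi> \<union> preds \<psi>"
| "preds (Ex _ \<phi>) = preds \<phi>"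
| "preds (All _ \<phi>) = preds \<phi>"

fun sat :: "nat set \<Rightarrow> (psym \<Rightarrow> nat set) \<Rightarrow> (nat \<Rightarrow> nat) \<Rightarrow> fm \<Rightarrow> bool" where
  "sat D I e FF = False"
| "sat D I e (Atom R v) = (e v \<in> I R)"
| "sat D I e (Eq u v) = (e u = e v)"
| "sat D I e (Neg \<phi>) = (\<not> sat D I e \<phi>)"
| "sat D I e (Conj \<phi> \<psi>) = (sat D I e \<phi> \<and> sat D I e \<psi>)"
| "sat D I e (Disj \<phi> \<psi>) = (sat D I e \<phi> \<or> sat D I e \<psi>)"
| "sat D I e (Imp \<phi> \<psi>) = (sat D I e \<phi> \<longrightarrow> sat D I e \<psi>)"
| "sat D I e (Ex v \<phi>) = (\<exists>d\<in>D. sat D I (e(v := d)) \<phi>)"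
| "sat D I e (All v \<phi>) = (\<forall>d\<in>D. sat D I (e(v := d)) \<phi>)"

definition holds :: "nat set \<Rightarrow> (psym \<Rightarrow> nat set) \<Rightarrow> fm \<Rightarrow> bool" where
  "holds D I \<phi> \<longleftrightarrow> (\<forall>e. range e \<subseteq> D \<longrightarrow> sat D I e \<phi>)"

text \<open>Semantic consequence. Countable structures suffice for a countable language
  (downward Loewenheim-Skolem), so domains are taken to be nonempty sets of naturals.\<close>
definition entails :: "fm set \<Rightarrow> fm \<Rightarrow> bool" where
  "entails S \<phi> \<longleftrightarrow>
     (\<forall>(D::nat set) I. D \<noteq> {} \<longrightarrow> (\<forall>\<psi>\<in>S. holds D I \<psi>) \<longrightarrow> holds D I \<phi>)"

definition in_lang :: "psym set \<Rightarrow> fm \<Rightarrow> bool" where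
  "in_lang L \<phi> \<longleftrightarrow> preds \<phi> \<subseteq> L"

definition sentence :: "psym set \<Rightarrow> fm \<Rightarrow> bool" where
  "sentence L \<phi> \<longleftrightarrow> in_lang L \<phi> \<and> fv \<phi> = {}"

definition fo_closure :: "psym set \<Rightarrow> fm set \<Rightarrow> fm set" where
  "fo_closure L S = {\<sigma>. sentence L \<sigma> \<and> entails S \<sigma>}"

definition exs :: "nat list \<Rightarrow> fm \<Rightarrow> fm" where
  "exs xs \<phi> = foldr Ex xs \<phi>"

definition alls :: "nat list \<Rightarrow> fm \<Rightarrow> fm" where
  "alls xs \<phi> = foldr All xs \<phi>"

fun bigAnd :: "fm list \<Rightarrow> fm" where
  "bigAnd [] = Neg FF"
| "bigAnd (\<phi> # \<phi>s) = Conj \<phi> (bigAnd \<phi>s)"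

definition pset :: "psym set \<Rightarrow> nat list \<Rightarrow> fm set \<Rightarrow> fm set \<Rightarrow> fm set" where
  "pset L xs p S =
     {Neg (exs xs \<phi>) | \<phi>. in_lang L \<phi> \<and> fv \<phi> \<subseteq> set xs \<and>
        (\<forall>\<psi>\<in>p. entails S (alls xs (Imp \<phi> \<psi>)))}"

definition jump :: "psym set \<Rightarrow> nat list \<Rightarrow> fm set \<Rightarrow> fm set \<Rightarrow> fm set" where
  "jump L xs p S = fo_closure L (S \<union> pset L xs p S)"

definition ord_rel :: "(ordn \<times> ordn) set" where
  "ord_rel = {(\<beta>, \<alpha>). nf \<beta> \<and> nf \<alpha> \<and> ord_lt \<beta> \<alpha>}"

definition iter :: "psym set \<Rightarrow> nat list \<Rightarrow> fm set \<Rightarrow> fm set \<Rightarrow> ordn \<Rightarrow> fm set" where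
  "iter L xs p T = wfrec ord_rel (\<lambda>rec \<alpha>.
      if \<alpha> = OZ then fo_closure L T
      else if is_succ \<alpha> then jump L xs p (rec (opred \<alpha>))
      else \<Union>{rec \<beta> | \<beta>. nf \<beta> \<and> ord_lt \<beta> \<alpha>})"

text \<open>[T]^p_infinity = union of all [T]^p_alpha over all ordinals; since the stages
  increase and [.]^p is monotone, this is the least set containing the closure of T
  and closed under [.]^p.\<close>
definition iter_inf :: "psym set \<Rightarrow> nat list \<Rightarrow> fm set \<Rightarrow> fm set \<Rightarrow> fm set" where
  "iter_inf L xs p T = \<Inter>{S. fo_closure L T \<subseteq> S \<and> jump L xs p S \<subseteq> S}"

definition rank_is :: "psym set \<Rightarrow> nat list \<Rightarrow> fm set \<Rightarrow> fm set \<Rightarrow> ordn \<Rightarrow> bool" where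
  "rank_is L xs p T \<alpha> \<longleftrightarrow>
     iter L xs p T \<alpha> = iter_inf L xs p T \<and>
     (\<forall>\<beta>. nf \<beta> \<and> ord_lt \<beta> \<alpha> \<longrightarrow> iter L xs p T \<beta> \<noteq> iter_inf L xs p T)"

definition lang_tau :: "nat list set \<Rightarrow> psym set" where
  "lang_tau t = {P s | s. s \<in> t \<and> s \<noteq> []} \<union> range U"

definition exists_ge :: "nat \<Rightarrow> fm" where
  "exists_ge i = (let vs = [1..<i+1] in
     exs vs (Conj (bigAnd [Neg (Eq a b). a \<leftarrow> vs, b \<leftarrow> vs, a < b])
                  (bigAnd [Atom (U j) a. a \<leftarrow> vs, j \<leftarrow> [0..<i+1]])))"

definition T_tau :: "nat list set \<Rightarrow> fm set" where
  "T_tau t =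
     {Imp (Neg (Ex 0 (Atom (P (s @ [i])) 0))) (All 0 (Imp (Atom (P s) 0) (Atom (U i) 0)))
       | s i. s @ [i] \<in> t \<and> s \<noteq> []}
   \<union> {All 0 (Imp (Atom (P s) 0) (Atom (U i) 0)) | s i. rank0 t s \<and> s \<noteq> []}
   \<union> {exists_ge i | i. True}"

definition p_U :: "fm set" where
  "p_U = {Atom (U i) 0 | i. True}"

definition rk_tau_is :: "(ordn \<Rightarrow> nat \<Rightarrow> ordn) \<Rightarrow> ordn \<Rightarrow> bool" where
  "rk_tau_is f \<alpha> \<longleftrightarrow>
     rank_is (lang_tau (tau f \<alpha>)) [0] p_U (T_tau (tau f \<alpha>)) \<alpha>"

end

theory Submission
  imports Defs
begin

lemma ord_lt_OZ[simp]: "\<not> ord_lt a OZ"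
  by (cases a) auto

lemma OZ_lt_iff: "ord_lt OZ a \<longleftrightarrow> a \<noteq> OZ"
  by (cases a) auto

lemma ord_lt_irrefl[simp]: "\<not> ord_lt a a"
  by (induction a) auto

lemma ord_lt_trans: "ord_lt a b \<Longrightarrow> ord_lt b c \<Longrightarrow> ord_lt a c"
proof (induction a arbitrary: b c)
  case OZ then show ?case by (cases b; cases c) auto
next
  case (OP a1 a2)
  obtain b1 b2 where b: "b = OP b1 b2" using OP.prems by (cases b) auto
  obtain c1 c2 where c: "c = OP c1 c2" using OP.prems b by (cases c) auto
  have h1: "ord_lt a1 b1 \<or> (a1 = b1 \<and> ord_lt a2 b2)" using OP.prems(1) b by simp
  have h2: "ord_lt b1 c1 \<or> (b1 = c1 \<and> ord_lt b2 c2)" using OP.prems(2) b c by simp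
  have "ord_lt a1 c1 \<or> (a1 = c1 \<and> ord_lt a2 c2)"
    using h1 h2 OP.IH(1)[of b1 c1] OP.IH(2)[of b2 c2] by blast
  then show ?case using c by simp
qed

lemma ord_lt_asym: "ord_lt a b \<Longrightarrow> \<not> ord_lt b a"
  using ord_lt_trans ord_lt_irrefl by blast

lemma ord_lt_total: "ord_lt a b \<or> a = b \<or> ord_lt b a"
proof (induction a arbitrary: b)
  case OZ then show ?case by (cases b) auto
next
  case (OP a1 a2)
  then show ?case by (cases b) auto
qed

lemma ord_le_refl[simp]: "ord_le a a" by (simp add: ord_le_def)
lemma ord_le_OZ[simp]: "ord_le OZ a" by (cases a) (auto simp: ord_le_def)

lemma ord_le_trans: "ord_le a b \<Longrightarrow> ord_le b c \<Longrightarrow> ord_le a c"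
  unfolding ord_le_def using ord_lt_trans by blast
lemma ord_le_lt_trans: "ord_le a b \<Longrightarrow> ord_lt b c \<Longrightarrow> ord_lt a c"
  unfolding ord_le_def using ord_lt_trans by blast
lemma ord_lt_le_trans: "ord_lt a b \<Longrightarrow> ord_le b c \<Longrightarrow> ord_lt a c"
  unfolding ord_le_def using ord_lt_trans by blast
lemma ord_not_lt: "\<not> ord_lt a b \<longleftrightarrow> ord_le b a"
  unfolding ord_le_def using ord_lt_total ord_lt_asym by blast
lemma ord_not_le: "\<not> ord_le a b \<longleftrightarrow> ord_lt b a"
  unfolding ord_le_def using ord_lt_total ord_lt_asym by blast

lemma nf_tail_lt: "nf (OP a b) \<Longrightarrow> ord_lt b (OP a b)"
proof (induction b arbitrary: a)
  case OZ then show ?case by simp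
next
  case (OP c d)
  then have "ord_lt c a \<or> c = a" using ord_lt_total by auto
  then show ?case using OP by auto
qed

abbreviation "AccO \<equiv> Wellfounded.acc ord_rel"

lemma OZacc: "OZ \<in> AccO"
  by (rule accI) (auto simp: ord_rel_def)

lemma acc_inner:
  assumes IHx: "\<And>c. (c, x) \<in> ord_rel \<Longrightarrow> \<forall>d. d \<in> AccO \<longrightarrow> nf (OP c d) \<longrightarrow> OP c d \<in> AccO"
    and yA: "y \<in> AccO"
  shows "nf (OP x y) \<longrightarrow> OP x y \<in> AccO"
  using yA
proof (induct y rule: acc_induct_rule)
  fix y assume IHy: "\<And>z. (z, y) \<in> ord_rel \<Longrightarrow> nf (OP x z) \<longrightarrow> OP x z \<in> AccO"
  show "nf (OP x y) \<longrightarrow> OP x y \<in> AccO"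
  proof
    assume nfxy: "nf (OP x y)"
    have below: "\<And>z. nf z \<Longrightarrow> ord_lt z (OP x y) \<Longrightarrow> z \<in> AccO"
    proof -
      fix z show "nf z \<Longrightarrow> ord_lt z (OP x y) \<Longrightarrow> z \<in> AccO"
      proof (induction z)
        case OZ then show ?case using OZacc by simp
      next
        case (OP c d)
        have nfd: "nf d" and nfc: "nf c" using OP.prems by auto
        have "ord_lt d (OP c d)" using nf_tail_lt OP.prems by blast
        then have "ord_lt d (OP x y)" using OP.prems ord_lt_trans by blast
        then have dA: "d \<in> AccO" using OP.IH(2) nfd by blast
        show ?case
        proof (cases "ord_lt c x")
          case True
          then have "(c, x) \<in> ord_rel" using nfc nfxy by (auto simp: ord_rel_def)
          then show ?thesis using IHx dA OP.prems by blast
        next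
          case False
          then have "c = x" "ord_lt d y" using OP.prems by auto
          then have "(d, y) \<in> ord_rel" using nfd nfxy by (auto simp: ord_rel_def)
          then show ?thesis using IHy dA OP.prems \<open>c = x\<close> by blast
        qed
      qed
    qed
    show "OP x y \<in> AccO"
      by (rule accI) (use below in \<open>auto simp: ord_rel_def\<close>)
  qed
qed

lemma acc_main: "x \<in> AccO \<Longrightarrow> \<forall>y. y \<in> AccO \<longrightarrow> nf (OP x y) \<longrightarrow> OP x y \<in> AccO"
proof (induct x rule: acc_induct_rule)
  fix x assume IH: "\<And>c. (c, x) \<in> ord_rel \<Longrightarrow> \<forall>d. d \<in> AccO \<longrightarrow> nf (OP c d) \<longrightarrow> OP c d \<in> AccO"
  show "\<forall>y. y \<in> AccO \<longrightarrow> nf (OP x y) \<longrightarrow> OP x y \<in> AccO"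
  proof (intro allI impI)
    fix y assume yA: "y \<in> AccO" and n: "nf (OP x y)"
    show "OP x y \<in> AccO" using acc_inner[of x y, OF IH yA] n by blast
  qed
qed

lemma allnf_acc: "nf a \<Longrightarrow> a \<in> AccO"
proof (induction a)
  case OZ show ?case by (rule OZacc)
next
  case (OP a b)
  have "a \<in> AccO" using OP.IH(1) OP.prems by simp
  moreover have "b \<in> AccO" using OP.IH(2) OP.prems by simp
  ultimately show ?case using acc_main[of a] OP.prems by simp
qed

lemma all_acc: "a \<in> AccO"
proof (cases "nf a")
  case True then show ?thesis by (rule allnf_acc)
next
  case False
  show ?thesis
  proof (rule accI)
    fix y assume "(y, a) \<in> ord_rel"
    with False show "y \<in> AccO" by (simp add: ord_rel_def)
  qed
qed

lemma wf_ord_rel: "wf ord_rel"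
  by (rule acc_wfI) (simp add: all_acc)

lemma nf_opred: "nf a \<Longrightarrow> nf (opred a)"
proof (induction a)
  case OZ then show ?case by simp
next
  case (OP a b)
  show ?case
  proof (cases b)
    case OZ then show ?thesis by simp
  next
    case (OP c d)
    have "opred b = OZ \<or> (\<exists>d'. opred b = OP c d')" using OP by auto
    then show ?thesis using OP.IH OP.prems \<open>b = OP c d\<close> by auto
  qed
qed

lemma opred_lt: "a \<noteq> OZ \<Longrightarrow> ord_lt (opred a) a"
proof (induction a)
  case OZ then show ?case by simp
next
  case (OP a b) then show ?case by (cases "b = OZ") auto
qed

lemma lastexp_OP: "b \<noteq> OZ \<Longrightarrow> lastexp (OP a b) = lastexp b" by simp

lemma succ_le_opred: "is_succ x \<Longrightarrow> ord_lt \<beta> x \<Longrightarrow> ord_le \<beta> (opred x)"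
proof (induction x arbitrary: \<beta>)
  case OZ then show ?case by (simp add: is_succ_def)
next
  case (OP a b)
  show ?case
  proof (cases "b = OZ")
    case True
    then have "a = OZ" using OP.prems by (simp add: is_succ_def)
    then show ?thesis using OP.prems True by (cases \<beta>) (auto simp: ord_le_def)
  next
    case False
    then have sb: "is_succ b" using OP.prems by (simp add: is_succ_def)
    show ?thesis
    proof (cases \<beta>)
      case OZ then show ?thesis by simp
    next
      case (OP c d)
      then have "ord_lt c a \<or> (c = a \<and> ord_lt d b)" using OP.prems \<open>\<beta> = OP c d\<close> by simp
      then show ?thesis
      proof
        assume "ord_lt c a" then show ?thesis using False \<open>\<beta> = OP c d\<close> by (simp add: ord_le_def)
      next
        assume "c = a \<and> ord_lt d b"
        then have "ord_le d (opred b)" using OP.IH(2) sb by blast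
        then show ?thesis using False \<open>\<beta> = OP c d\<close> \<open>c = a \<and> ord_lt d b\<close> by (auto simp: ord_le_def)
      qed
    qed
  qed
qed

fun osucc :: "ordn \<Rightarrow> ordn" where
  "osucc OZ = OP OZ OZ"
| "osucc (OP a b) = OP a (osucc b)"

lemma osucc_ne[simp]: "osucc a \<noteq> OZ" by (cases a) auto

lemma nf_osucc: "nf a \<Longrightarrow> nf (osucc a)"
proof (induction a)
  case OZ then show ?case by simp
next
  case (OP a b)
  then show ?case by (cases b) auto
qed

lemma lastexp_osucc: "lastexp (osucc a) = OZ"
  by (induction a) auto

lemma is_succ_osucc: "is_succ (osucc a)"
  by (simp add: is_succ_def lastexp_osucc)

lemma opred_osucc[simp]: "opred (osucc a) = a"
  by (induction a) auto

lemma lt_osucc: "ord_lt a (osucc a)"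
  by (induction a) auto

lemma osucc_le: "ord_lt d b \<Longrightarrow> ord_le (osucc d) b"
proof (induction d arbitrary: b)
  case OZ
  then obtain c e where b: "b = OP c e" by (cases b) auto
  show ?case using b OZ_lt_iff[of c] by (cases "c = OZ") (auto simp: ord_le_def OZ_lt_iff)
next
  case (OP a1 a2)
  obtain c e where b: "b = OP c e" using OP.prems by (cases b) auto
  have "ord_lt a1 c \<or> (a1 = c \<and> ord_lt a2 e)" using OP.prems b by simp
  then show ?case
  proof
    assume "ord_lt a1 c" then show ?thesis using b by (simp add: ord_le_def)
  next
    assume h: "a1 = c \<and> ord_lt a2 e"
    then have "ord_le (osucc a2) e" using OP.IH(2) by blast
    then show ?thesis using b h by (auto simp: ord_le_def)
  qed
qed

lemma nf_rep_aux: "nf x \<Longrightarrow> nf (rep i x OZ) \<and> (case rep i x OZ of OZ \<Rightarrow> True | OP c d \<Rightarrow> \<not> ord_lt x c)"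
  by (induction i) auto

lemma nf_rep: "nf x \<Longrightarrow> nf (rep i x OZ)"
  using nf_rep_aux by blast

lemma rep_inc: "ord_lt (rep i x OZ) (rep (Suc i) x OZ)"
  by (induction i) auto

lemma rep_lt: "ord_lt x a \<Longrightarrow> ord_lt (rep i x OZ) (OP a OZ)"
  by (cases i) auto

definition lead_le :: "ordn \<Rightarrow> ordn \<Rightarrow> bool" where
  "lead_le b a = (case b of OZ \<Rightarrow> True | OP c d \<Rightarrow> \<not> ord_lt a c)"

lemma nf_OP_iff: "nf (OP a b) \<longleftrightarrow> nf a \<and> nf b \<and> lead_le b a"
  by (simp add: lead_le_def)

lemma rep_cof: "nf \<beta> \<Longrightarrow> lead_le \<beta> x \<Longrightarrow> \<exists>i. ord_le \<beta> (rep i x OZ)"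
proof (induction \<beta>)
  case OZ then show ?case by auto
next
  case (OP c d)
  have c: "ord_le c x" using OP.prems by (simp add: lead_le_def ord_not_lt)
  have "lead_le d x"
  proof (cases d)
    case (OP c' d') then show ?thesis using OP.prems c
      by (auto simp: lead_le_def ord_not_lt intro: ord_le_trans)
  qed (simp add: lead_le_def)
  then obtain i where i: "ord_le d (rep i x OZ)" using OP by auto
  show ?case
  proof (cases "c = x")
    case True
    then have "ord_le (OP c d) (rep (Suc i) x OZ)" using i by (auto simp: ord_le_def)
    then show ?thesis by blast
  next
    case False
    then have "ord_lt c x" using c by (simp add: ord_le_def)
    then have "ord_le (OP c d) (rep (Suc i) x OZ)" by (simp add: ord_le_def)
    then show ?thesis by blast
  qed
qed

lemma is_limit_OP: "is_limit (OP a b) \<longleftrightarrow> (if b = OZ then a \<noteq> OZ else is_limit b)"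
  by (auto simp: is_limit_def)

lemma fs_lt: "nf l \<Longrightarrow> is_limit l \<Longrightarrow> ord_lt (fs_cnf l i) l"
proof (induction l)
  case OZ then show ?case by (simp add: is_limit_def)
next
  case (OP a b)
  show ?case
  proof (cases "b = OZ")
    case True
    then have a0: "a \<noteq> OZ" using OP.prems by (simp add: is_limit_OP)
    show ?thesis
    proof (cases "lastexp a = OZ")
      case True
      then show ?thesis using a0 \<open>b = OZ\<close> opred_lt[OF a0] by (simp add: rep_lt)
    next
      case False
      then have "is_limit a" using a0 by (simp add: is_limit_def)
      then show ?thesis using OP a0 \<open>b = OZ\<close> False by simp
    qed
  next
    case False
    then show ?thesis using OP by (simp add: is_limit_OP)
  qed
qed

lemma fs_inc: "nf l \<Longrightarrow> is_limit l \<Longrightarrow> ord_lt (fs_cnf l i) (fs_cnf l (Suc i))"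
proof (induction l)
  case OZ then show ?case by (simp add: is_limit_def)
next
  case (OP a b)
  show ?case
  proof (cases "b = OZ")
    case True
    then have a0: "a \<noteq> OZ" using OP.prems by (simp add: is_limit_OP)
    show ?thesis
    proof (cases "lastexp a = OZ")
      case True
      then show ?thesis using a0 \<open>b = OZ\<close> rep_inc by simp
    next
      case False
      then have "is_limit a" using a0 by (simp add: is_limit_def)
      then show ?thesis using OP a0 \<open>b = OZ\<close> False by simp
    qed
  next
    case False
    then show ?thesis using OP by (simp add: is_limit_OP)
  qed
qed

lemma fs_nf: "nf l \<Longrightarrow> is_limit l \<Longrightarrow> l = OP a b \<Longrightarrow> nf (fs_cnf l i) \<and> lead_le (fs_cnf l i) a"
proof (induction l arbitrary: a b)
  case OZ then show ?case by simp
next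
  case (OP a' b')
  then have ab: "a' = a" "b' = b" by auto
  have IH1: "\<And>x y. nf a \<Longrightarrow> is_limit a \<Longrightarrow> a = OP x y \<Longrightarrow> nf (fs_cnf a i) \<and> lead_le (fs_cnf a i) x"
    using OP.IH(1) ab by blast
  have IH2: "\<And>x y. nf b \<Longrightarrow> is_limit b \<Longrightarrow> b = OP x y \<Longrightarrow> nf (fs_cnf b i) \<and> lead_le (fs_cnf b i) x"
    using OP.IH(2) ab by blast
  show ?case
  proof (cases "b = OZ")
    case True
    then have a0: "a \<noteq> OZ" using OP.prems ab by (simp add: is_limit_OP)
    show ?thesis
    proof (cases "lastexp a = OZ")
      case True
      have "nf (opred a)" using nf_opred OP.prems ab by simp
      then have "nf (rep i (opred a) OZ)" by (rule nf_rep)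
      moreover have "lead_le (rep i (opred a) OZ) a"
        using opred_lt[OF a0] ord_lt_asym by (cases i) (auto simp: lead_le_def)
      ultimately show ?thesis using a0 \<open>b = OZ\<close> True ab by simp
    next
      case False
      then have la: "is_limit a" using a0 by (simp add: is_limit_def)
      obtain a1 a2 where a12: "a = OP a1 a2" using a0 by (cases a) auto
      have "nf (fs_cnf a i)" using IH1[OF _ la a12] OP.prems ab by simp
      moreover have "ord_lt (fs_cnf a i) a" using fs_lt la OP.prems ab by simp
      ultimately show ?thesis using a0 \<open>b = OZ\<close> False ab ord_lt_asym
        by (auto simp: lead_le_def)
    qed
  next
    case False
    then obtain c d where bcd: "b = OP c d" by (cases b) auto
    have lb: "is_limit b" using OP.prems ab False by (simp add: is_limit_OP)
    have h: "nf (fs_cnf b i) \<and> lead_le (fs_cnf b i) c"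
      using IH2[OF _ lb bcd] OP.prems ab by simp
    have ca: "\<not> ord_lt a c" using OP.prems ab bcd by simp
    have "lead_le (fs_cnf b i) a"
      using h ca unfolding lead_le_def
      by (auto split: ordn.split simp: ord_not_lt intro: ord_le_trans)
    then show ?thesis using h OP.prems ab False by (simp add: lead_le_def)
  qed
qed

lemma fs_cof: "nf l \<Longrightarrow> is_limit l \<Longrightarrow> nf \<beta> \<Longrightarrow> ord_lt \<beta> l \<Longrightarrow> \<exists>i. ord_le \<beta> (fs_cnf l i)"
proof (induction l arbitrary: \<beta>)
  case OZ then show ?case by simp
next
  case (OP a b)
  show ?case
  proof (cases \<beta>)
    case OZ then show ?thesis by simp
  next
    case (OP c d)
    note \<beta> = this
    show ?thesis
    proof (cases "b = OZ")
      case True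
      then have a0: "a \<noteq> OZ" using OP.prems by (simp add: is_limit_OP)
      have ca: "ord_lt c a" using OP.prems \<beta> True by simp
      show ?thesis
      proof (cases "lastexp a = OZ")
        case True
        then have "is_succ a" using a0 by (simp add: is_succ_def)
        then have "ord_le c (opred a)" using succ_le_opred ca by blast
        then have "lead_le \<beta> (opred a)" using \<beta> by (simp add: lead_le_def ord_not_lt)
        then obtain i where "ord_le \<beta> (rep i (opred a) OZ)" using rep_cof OP.prems by blast
        then show ?thesis using a0 True \<open>b = OZ\<close> by auto
      next
        case False
        then have la: "is_limit a" using a0 by (simp add: is_limit_def)
        obtain i where i: "ord_le c (fs_cnf a i)"
          using OP.IH(1)[OF _ la _ ca] OP.prems \<beta> by auto
        have "ord_lt c (fs_cnf a (Suc i))"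
          using ord_le_lt_trans[OF i fs_inc[OF _ la]] OP.prems by simp
        then have "ord_le \<beta> (OP (fs_cnf a (Suc i)) OZ)" using \<beta> by (simp add: ord_le_def)
        then show ?thesis using a0 False \<open>b = OZ\<close> by (intro exI[of _ "Suc i"]) simp
      qed
    next
      case False
      have lb: "is_limit b" using OP.prems False by (simp add: is_limit_OP)
      have "ord_lt c a \<or> (c = a \<and> ord_lt d b)" using OP.prems \<beta> by simp
      then show ?thesis
      proof
        assume "ord_lt c a"
        then show ?thesis using \<beta> False by (intro exI[of _ 0]) (simp add: ord_le_def)
      next
        assume h: "c = a \<and> ord_lt d b"
        then obtain i where "ord_le d (fs_cnf b i)" using OP.IH(2)[OF _ lb] OP.prems \<beta> by auto
        then show ?thesis using h \<beta> False by (intro exI[of _ i]) (auto simp: ord_le_def)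
      qed
    qed
  qed
qed

lemma finite_preds: "finite (preds \<phi>)"
  by (induction \<phi>) auto

lemma finite_fv: "finite (fv \<phi>)"
  by (induction \<phi>) auto

lemma sat_coincide: "(\<forall>v\<in>fv \<phi>. e v = e' v) \<Longrightarrow> sat D I e \<phi> = sat D I e' \<phi>"
proof (induction \<phi> arbitrary: e e')
  case (Ex v \<phi>)
  have "\<And>d. sat D I (e(v:=d)) \<phi> = sat D I (e'(v:=d)) \<phi>"
    by (rule Ex.IH) (use Ex.prems in auto)
  then show ?case by simp
next
  case (All v \<phi>)
  have "\<And>d. sat D I (e(v:=d)) \<phi> = sat D I (e'(v:=d)) \<phi>"
    by (rule All.IH) (use All.prems in auto)
  then show ?case by simp
next
  case (Neg a)
  have "sat D I e a = sat D I e' a" by (rule Neg.IH) (use Neg.prems in auto)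
  then show ?case by simp
next
  case (Conj a b)
  have "sat D I e a = sat D I e' a" by (rule Conj.IH(1)) (use Conj.prems in auto)
  moreover have "sat D I e b = sat D I e' b" by (rule Conj.IH(2)) (use Conj.prems in auto)
  ultimately show ?case by simp
next
  case (Disj a b)
  have "sat D I e a = sat D I e' a" by (rule Disj.IH(1)) (use Disj.prems in auto)
  moreover have "sat D I e b = sat D I e' b" by (rule Disj.IH(2)) (use Disj.prems in auto)
  ultimately show ?case by simp
next
  case (Imp a b)
  have "sat D I e a = sat D I e' a" by (rule Imp.IH(1)) (use Imp.prems in auto)
  moreover have "sat D I e b = sat D I e' b" by (rule Imp.IH(2)) (use Imp.prems in auto)
  ultimately show ?case by simp
qed auto

lemma sat_relevant: "(\<forall>R\<in>preds \<phi>. I R \<inter> D = I' R \<inter> D) \<Longrightarrow> range e \<subseteq> D \<Longrightarrow> sat D I e \<phi> = sat D I' e \<phi>"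
proof (induction \<phi> arbitrary: e)
  case (Atom R v)
  then have "e v \<in> D" by auto
  then show ?case using Atom by auto
next
  case (Ex v \<phi>)
  have "\<And>d. d \<in> D \<Longrightarrow> sat D I (e(v:=d)) \<phi> = sat D I' (e(v:=d)) \<phi>"
    by (rule Ex.IH) (use Ex.prems in auto)
  then show ?case by simp
next
  case (All v \<phi>)
  have "\<And>d. d \<in> D \<Longrightarrow> sat D I (e(v:=d)) \<phi> = sat D I' (e(v:=d)) \<phi>"
    by (rule All.IH) (use All.prems in auto)
  then show ?case by simp
next
  case (Neg a)
  have "sat D I e a = sat D I' e a" by (rule Neg.IH) (use Neg.prems in auto)
  then show ?case by simp
next
  case (Conj a b)
  have "sat D I e a = sat D I' e a" by (rule Conj.IH(1)) (use Conj.prems in auto)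
  moreover have "sat D I e b = sat D I' e b" by (rule Conj.IH(2)) (use Conj.prems in auto)
  ultimately show ?case by simp
next
  case (Disj a b)
  have "sat D I e a = sat D I' e a" by (rule Disj.IH(1)) (use Disj.prems in auto)
  moreover have "sat D I e b = sat D I' e b" by (rule Disj.IH(2)) (use Disj.prems in auto)
  ultimately show ?case by simp
next
  case (Imp a b)
  have "sat D I e a = sat D I' e a" by (rule Imp.IH(1)) (use Imp.prems in auto)
  moreover have "sat D I e b = sat D I' e b" by (rule Imp.IH(2)) (use Imp.prems in auto)
  ultimately show ?case by simp
qed auto

lemma sat_iso:
  assumes "inj_on h D"
  shows "(\<forall>R\<in>preds \<phi>. \<forall>x\<in>D. x \<in> I R \<longleftrightarrow> h x \<in> I2 R) \<Longrightarrow> range e \<subseteq> D \<Longrightarrow>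
     sat D I e \<phi> = sat (h ` D) I2 (h \<circ> e) \<phi>"
proof (induction \<phi> arbitrary: e)
  case (Atom R v)
  then have "e v \<in> D" by auto
  then show ?case using Atom by auto
next
  case (Eq u v)
  have "e u \<in> D" "e v \<in> D" using Eq by auto
  then show ?case using assms by (auto simp: inj_on_def)
next
  case (Neg a)
  have "sat D I e a = sat (h ` D) I2 (h \<circ> e) a" by (rule Neg.IH) (use Neg.prems in auto)
  then show ?case by (simp only: sat.simps)
next
  case (Conj a b)
  have "sat D I e a = sat (h ` D) I2 (h \<circ> e) a" by (rule Conj.IH(1)) (use Conj.prems in auto)
  moreover have "sat D I e b = sat (h ` D) I2 (h \<circ> e) b" by (rule Conj.IH(2)) (use Conj.prems in auto)
  ultimately show ?case by (simp only: sat.simps)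
next
  case (Disj a b)
  have "sat D I e a = sat (h ` D) I2 (h \<circ> e) a" by (rule Disj.IH(1)) (use Disj.prems in auto)
  moreover have "sat D I e b = sat (h ` D) I2 (h \<circ> e) b" by (rule Disj.IH(2)) (use Disj.prems in auto)
  ultimately show ?case by (simp only: sat.simps)
next
  case (Imp a b)
  have "sat D I e a = sat (h ` D) I2 (h \<circ> e) a" by (rule Imp.IH(1)) (use Imp.prems in auto)
  moreover have "sat D I e b = sat (h ` D) I2 (h \<circ> e) b" by (rule Imp.IH(2)) (use Imp.prems in auto)
  ultimately show ?case by (simp only: sat.simps)
next
  case (Ex v \<phi>)
  have eq: "\<And>d. d \<in> D \<Longrightarrow> sat D I (e(v:=d)) \<phi> = sat (h ` D) I2 ((h \<circ> e)(v := h d)) \<phi>"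
  proof -
    fix d assume "d \<in> D"
    have r: "range (e(v:=d)) \<subseteq> D" using Ex.prems(2) \<open>d \<in> D\<close> by auto
    have "h \<circ> (e(v:=d)) = (h \<circ> e)(v := h d)" by auto
    moreover have "sat D I (e(v:=d)) \<phi> = sat (h ` D) I2 (h \<circ> (e(v:=d))) \<phi>"
      by (rule Ex.IH[OF _ r]) (use Ex.prems in auto)
    ultimately show "sat D I (e(v:=d)) \<phi> = sat (h ` D) I2 ((h \<circ> e)(v := h d)) \<phi>"
      by simp
  qed
  show ?case
    by (simp only: sat.simps) (auto simp: eq)
next
  case (All v \<phi>)
  have eq: "\<And>d. d \<in> D \<Longrightarrow> sat D I (e(v:=d)) \<phi> = sat (h ` D) I2 ((h \<circ> e)(v := h d)) \<phi>"
  proof -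
    fix d assume "d \<in> D"
    have r: "range (e(v:=d)) \<subseteq> D" using All.prems(2) \<open>d \<in> D\<close> by auto
    have "h \<circ> (e(v:=d)) = (h \<circ> e)(v := h d)" by auto
    moreover have "sat D I (e(v:=d)) \<phi> = sat (h ` D) I2 (h \<circ> (e(v:=d))) \<phi>"
      by (rule All.IH[OF _ r]) (use All.prems in auto)
    ultimately show "sat D I (e(v:=d)) \<phi> = sat (h ` D) I2 ((h \<circ> e)(v := h d)) \<phi>"
      by simp
  qed
  show ?case
    by (simp only: sat.simps) (auto simp: eq)
qed auto

definition swp :: "nat \<Rightarrow> nat \<Rightarrow> nat \<Rightarrow> nat" where
  "swp c d x = (if x = c then d else if x = d then c else x)"

lemma swap_sat:
  assumes cD: "c \<in> D'" and dD: "d0 \<in> D'"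
    and tyeq: "\<forall>R\<in>preds \<psi>. d0 \<in> I R \<longleftrightarrow> c \<in> I R"
    and rng: "range e \<subseteq> D'" and ce: "c \<notin> e ` (fv \<psi> - {v})" and de: "d0 \<notin> e ` (fv \<psi> - {v})"
  shows "sat D' I (e(v:=c)) \<psi> = sat D' I (e(v:=d0)) \<psi>"
proof -
  let ?h = "swp c d0"
  have inj: "inj_on ?h D'" by (auto simp: inj_on_def swp_def split: if_splits)
  have img: "?h ` D' = D'"
  proof
    show "?h ` D' \<subseteq> D'" using cD dD by (auto simp: swp_def)
    show "D' \<subseteq> ?h ` D'"
    proof
      fix x assume "x \<in> D'"
      have "?h (?h x) = x" by (auto simp: swp_def)
      moreover have "?h x \<in> D'" using \<open>x \<in> D'\<close> cD dD by (auto simp: swp_def)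
      ultimately show "x \<in> ?h ` D'" by (metis imageI)
    qed
  qed
  have pr: "\<forall>R\<in>preds \<psi>. \<forall>x\<in>D'. x \<in> I R \<longleftrightarrow> ?h x \<in> I R"
    using tyeq by (auto simp: swp_def)
  have r2: "range (e(v:=c)) \<subseteq> D'" using rng cD by auto
  have "sat D' I (e(v:=c)) \<psi> = sat (?h ` D') I (?h \<circ> (e(v:=c))) \<psi>"
    using sat_iso[OF inj pr r2] .
  also have "\<dots> = sat D' I (?h \<circ> (e(v:=c))) \<psi>" using img by simp
  also have "\<dots> = sat D' I (e(v:=d0)) \<psi>"
  proof (rule sat_coincide)
    show "\<forall>w\<in>fv \<psi>. (?h \<circ> e(v := c)) w = (e(v := d0)) w"
      using ce de by (auto simp: swp_def)
  qed
  finally show ?thesis .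
qed

lemma add_elem:
  assumes cD: "c \<notin> D"
    and agree: "\<forall>R\<in>A. \<forall>x\<in>D. x \<in> I' R \<longleftrightarrow> x \<in> I R"
    and inf: "infinite {d\<in>D. \<forall>R\<in>A. d \<in> I R \<longleftrightarrow> c \<in> I' R}"
  shows "preds \<phi> \<subseteq> A \<Longrightarrow> range e \<subseteq> D \<Longrightarrow> sat (insert c D) I' e \<phi> = sat D I e \<phi>"
proof (induction \<phi> arbitrary: e)
  case (Atom R v)
  then have "e v \<in> D" by auto
  then show ?case using Atom agree by auto
next
  case (Ex v \<psi>)
  obtain d0 where d0: "d0 \<in> {d\<in>D. \<forall>R\<in>A. d \<in> I R \<longleftrightarrow> c \<in> I' R}" "d0 \<notin> e ` (fv \<psi> - {v})"
    using inf finite_fv[of \<psi>] by (metis (no_types, lifting) finite_Diff finite_imageI infinite_imp_nonempty Diff_infinite_finite ex_in_conv DiffE DiffI)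
  have swap: "sat (insert c D) I' (e(v:=c)) \<psi> = sat (insert c D) I' (e(v:=d0)) \<psi>"
  proof (rule swap_sat)
    show "\<forall>R\<in>preds \<psi>. d0 \<in> I' R \<longleftrightarrow> c \<in> I' R" using d0 agree Ex.prems by auto
    show "c \<notin> e ` (fv \<psi> - {v})" using Ex.prems cD by auto
  qed (use d0 Ex.prems in auto)
  have IH: "\<And>d. d \<in> D \<Longrightarrow> sat (insert c D) I' (e(v:=d)) \<psi> = sat D I (e(v:=d)) \<psi>"
    by (rule Ex.IH) (use Ex.prems in auto)
  show ?case using swap IH d0 by auto
next
  case (All v \<psi>)
  obtain d0 where d0: "d0 \<in> {d\<in>D. \<forall>R\<in>A. d \<in> I R \<longleftrightarrow> c \<in> I' R}" "d0 \<notin> e ` (fv \<psi> - {v})"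
    using inf finite_fv[of \<psi>] by (metis (no_types, lifting) finite_Diff finite_imageI infinite_imp_nonempty Diff_infinite_finite ex_in_conv DiffE DiffI)
  have swap: "sat (insert c D) I' (e(v:=c)) \<psi> = sat (insert c D) I' (e(v:=d0)) \<psi>"
  proof (rule swap_sat)
    show "\<forall>R\<in>preds \<psi>. d0 \<in> I' R \<longleftrightarrow> c \<in> I' R" using d0 agree All.prems by auto
    show "c \<notin> e ` (fv \<psi> - {v})" using All.prems cD by auto
  qed (use d0 All.prems in auto)
  have IH: "\<And>d. d \<in> D \<Longrightarrow> sat (insert c D) I' (e(v:=d)) \<psi> = sat D I (e(v:=d)) \<psi>"
    by (rule All.IH) (use All.prems in auto)
  show ?case using swap IH d0 by auto
qed auto

lemma sat_exs: "sat D I e (exs vs \<phi>) \<longleftrightarrow>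
   (\<exists>e'. (\<forall>w. w \<notin> set vs \<longrightarrow> e' w = e w) \<and> (\<forall>w\<in>set vs. e' w \<in> D) \<and> sat D I e' \<phi>)"
proof (induction vs arbitrary: e)
  case Nil
  then show ?case by (auto simp: exs_def) (metis ext)
next
  case (Cons v vs)
  have "sat D I e (exs (v # vs) \<phi>) \<longleftrightarrow> (\<exists>d\<in>D. sat D I (e(v:=d)) (exs vs \<phi>))"
    by (simp add: exs_def)
  also have "\<dots> \<longleftrightarrow> (\<exists>d\<in>D. \<exists>e'. (\<forall>w. w \<notin> set vs \<longrightarrow> e' w = (e(v:=d)) w) \<and> (\<forall>w\<in>set vs. e' w \<in> D) \<and> sat D I e' \<phi>)"
    using Cons.IH by simp
  also have "\<dots> \<longleftrightarrow> (\<exists>e'. (\<forall>w. w \<notin> set (v#vs) \<longrightarrow> e' w = e w) \<and> (\<forall>w\<in>set (v#vs). e' w \<in> D) \<and> sat D I e' \<phi>)"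
  proof
    assume "\<exists>d\<in>D. \<exists>e'. (\<forall>w. w \<notin> set vs \<longrightarrow> e' w = (e(v:=d)) w) \<and> (\<forall>w\<in>set vs. e' w \<in> D) \<and> sat D I e' \<phi>"
    then obtain d e' where "d \<in> D" "\<forall>w. w \<notin> set vs \<longrightarrow> e' w = (e(v:=d)) w" "\<forall>w\<in>set vs. e' w \<in> D" "sat D I e' \<phi>"
      by blast
    note hh = this
    have A: "\<forall>w. w \<notin> set (v#vs) \<longrightarrow> e' w = e w" using hh(2) by auto
    have B: "\<forall>w\<in>set (v#vs). e' w \<in> D"
    proof
      fix w assume "w \<in> set (v#vs)"
      then show "e' w \<in> D" using hh by (cases "w \<in> set vs") auto
    qed
    show "\<exists>e'. (\<forall>w. w \<notin> set (v#vs) \<longrightarrow> e' w = e w) \<and> (\<forall>w\<in>set (v#vs). e' w \<in> D) \<and> sat D I e' \<phi>"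
      using A B hh(4) by blast
  next
    assume "\<exists>e'. (\<forall>w. w \<notin> set (v#vs) \<longrightarrow> e' w = e w) \<and> (\<forall>w\<in>set (v#vs). e' w \<in> D) \<and> sat D I e' \<phi>"
    then obtain e' where h: "\<forall>w. w \<notin> set (v#vs) \<longrightarrow> e' w = e w" "\<forall>w\<in>set (v#vs). e' w \<in> D" "sat D I e' \<phi>"
      by blast
    show "\<exists>d\<in>D. \<exists>e'. (\<forall>w. w \<notin> set vs \<longrightarrow> e' w = (e(v:=d)) w) \<and> (\<forall>w\<in>set vs. e' w \<in> D) \<and> sat D I e' \<phi>"
      using h by (intro bexI[of _ "e' v"] exI[of _ e']) auto
  qed
  finally show ?case .
qed

lemma sat_bigAnd: "sat D I e (bigAnd l) \<longleftrightarrow> (\<forall>\<phi>\<in>set l. sat D I e \<phi>)"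
  by (induction l) auto

lemma fv_exs: "fv (exs vs \<phi>) = fv \<phi> - set vs"
  by (induction vs) (auto simp: exs_def)

lemma preds_exs: "preds (exs vs \<phi>) = preds \<phi>"
  by (induction vs) (auto simp: exs_def)

lemma fv_bigAnd: "fv (bigAnd l) = \<Union>(fv ` set l)"
  by (induction l) auto

lemma preds_bigAnd: "preds (bigAnd l) = \<Union>(preds ` set l)"
  by (induction l) auto

lemma mem_pairs: "\<phi> \<in> set [Neg (Eq a b). a \<leftarrow> vs, b \<leftarrow> vs, a < b] \<longleftrightarrow> (\<exists>a\<in>set vs. \<exists>b\<in>set vs. a < b \<and> \<phi> = Neg (Eq a b))"
  by (auto simp: set_concat)

lemma mem_atoms: "\<phi> \<in> set [Atom (U j) a. a \<leftarrow> vs, j \<leftarrow> js] \<longleftrightarrow> (\<exists>a\<in>set vs. \<exists>j\<in>set js. \<phi> = Atom (U j) a)"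
  by (auto simp: set_concat)

lemma fv_pairs: "fv (bigAnd [Neg (Eq a b). a \<leftarrow> vs, b \<leftarrow> vs, a < b]) \<subseteq> set vs"
  unfolding fv_bigAnd by (auto simp: mem_pairs)

lemma fv_atoms: "fv (bigAnd [Atom (U j) a. a \<leftarrow> vs, j \<leftarrow> js]) \<subseteq> set vs"
  unfolding fv_bigAnd by (auto simp: mem_atoms)

lemma preds_pairs: "preds (bigAnd [Neg (Eq a b). a \<leftarrow> vs, b \<leftarrow> vs, a < b]) = {}"
  unfolding preds_bigAnd by (auto simp: mem_pairs)

lemma preds_atoms: "preds (bigAnd [Atom (U j) a. a \<leftarrow> vs, j \<leftarrow> js]) \<subseteq> range U"
  unfolding preds_bigAnd by (auto simp: mem_atoms)

lemma sat_pairs: "sat D I e (bigAnd [Neg (Eq a b). a \<leftarrow> vs, b \<leftarrow> vs, a < b]) \<longleftrightarrow> (\<forall>a\<in>set vs. \<forall>b\<in>set vs. a < b \<longrightarrow> e a \<noteq> e b)"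
  unfolding sat_bigAnd by (auto simp: mem_pairs)

lemma sat_atoms: "sat D I e (bigAnd [Atom (U j) a. a \<leftarrow> vs, j \<leftarrow> js]) \<longleftrightarrow> (\<forall>a\<in>set vs. \<forall>j\<in>set js. e a \<in> I (U j))"
  unfolding sat_bigAnd by (auto simp: mem_atoms)

lemma fv_exists_ge: "fv (exists_ge k) = {}"
  unfolding exists_ge_def Let_def fv_exs fv.simps using fv_pairs fv_atoms by blast

lemma preds_exists_ge: "preds (exists_ge k) \<subseteq> range U"
  unfolding exists_ge_def Let_def preds_exs preds.simps using preds_pairs preds_atoms by blast

definition GE :: "nat set \<Rightarrow> (psym \<Rightarrow> nat set) \<Rightarrow> nat \<Rightarrow> bool" where
  "GE D I k \<longleftrightarrow> (\<exists>S. finite S \<and> card S = k \<and> S \<subseteq> D \<and> (\<forall>x\<in>S. \<forall>j\<le>k. x \<in> I (U j)))"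

lemma sat_exists_ge: "sat D I e (exists_ge k) \<longleftrightarrow> GE D I k"
proof -
  have "sat D I e (exists_ge k) \<longleftrightarrow>
    (\<exists>e'. (\<forall>w. w \<notin> {1..k} \<longrightarrow> e' w = e w) \<and> (\<forall>w\<in>{1..k}. e' w \<in> D) \<and>
      (\<forall>a\<in>{1..k}. \<forall>b\<in>{1..k}. a < b \<longrightarrow> e' a \<noteq> e' b) \<and>
      (\<forall>a\<in>{1..k}. \<forall>j\<le>k. e' a \<in> I (U j)))"
    unfolding exists_ge_def Let_def sat_exs sat.simps sat_pairs sat_atoms
    by (simp only: set_upt) (auto simp: less_Suc_eq_le)
  also have "\<dots> \<longleftrightarrow> GE D I k"
  proof
    assume "\<exists>e'. (\<forall>w. w \<notin> {1..k} \<longrightarrow> e' w = e w) \<and> (\<forall>w\<in>{1..k}. e' w \<in> D) \<and>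
      (\<forall>a\<in>{1..k}. \<forall>b\<in>{1..k}. a < b \<longrightarrow> e' a \<noteq> e' b) \<and>
      (\<forall>a\<in>{1..k}. \<forall>j\<le>k. e' a \<in> I (U j))"
    then obtain e' where h: "\<forall>w\<in>{1..k}. e' w \<in> D" "\<forall>a\<in>{1..k}. \<forall>b\<in>{1..k}. a < b \<longrightarrow> e' a \<noteq> e' b"
      "\<forall>a\<in>{1..k}. \<forall>j\<le>k. e' a \<in> I (U j)" by blast
    have inj: "inj_on e' {1..k}"
    proof (rule inj_onI)
      fix a b assume "a \<in> {1..k}" "b \<in> {1..k}" "e' a = e' b"
      then show "a = b" using h(2) by (metis linorder_neqE_nat)
    qed
    show "GE D I k" unfolding GE_def
      using h inj by (intro exI[of _ "e' ` {1..k}"]) (auto simp: card_image)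
  next
    assume "GE D I k"
    then obtain S where S: "finite S" "card S = k" "S \<subseteq> D" "\<forall>x\<in>S. \<forall>j\<le>k. x \<in> I (U j)"
      unfolding GE_def by blast
    obtain g where g: "bij_betw g {1..k} S" using ex_bij_betw_nat_finite_1[OF S(1)] S(2) by auto
    let ?e = "\<lambda>w. if w \<in> {1..k} then g w else e w"
    have "\<forall>w\<in>{1..k}. ?e w \<in> S" using g by (auto simp: bij_betw_def)
    moreover have "\<forall>a\<in>{1..k}. \<forall>b\<in>{1..k}. a < b \<longrightarrow> ?e a \<noteq> ?e b"
    proof (intro ballI impI)
      fix a b assume ab: "a \<in> {1..k}" "b \<in> {1..k}" "a < b"
      have inj: "inj_on g {1..k}" using g by (rule bij_betw_imp_inj_on)
      have "g a \<noteq> g b" using inj_onD[OF inj _ ab(1) ab(2)] ab(3) by auto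
      then show "?e a \<noteq> ?e b" using ab by simp
    qed
    ultimately show "\<exists>e'. (\<forall>w. w \<notin> {1..k} \<longrightarrow> e' w = e w) \<and> (\<forall>w\<in>{1..k}. e' w \<in> D) \<and>
      (\<forall>a\<in>{1..k}. \<forall>b\<in>{1..k}. a < b \<longrightarrow> e' a \<noteq> e' b) \<and>
      (\<forall>a\<in>{1..k}. \<forall>j\<le>k. e' a \<in> I (U j))"
      using S by (intro exI[of _ ?e]) auto
  qed
  finally show ?thesis .
qed

lemma holds_sentence: "fv \<sigma> = {} \<Longrightarrow> range e \<subseteq> D \<Longrightarrow> holds D I \<sigma> \<longleftrightarrow> sat D I e \<sigma>"
proof -
  assume f: "fv \<sigma> = {}" and r: "range e \<subseteq> D"
  have "\<And>ea. sat D I ea \<sigma> = sat D I e \<sigma>" by (rule sat_coincide) (simp add: f)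
  then show ?thesis using r unfolding holds_def by auto
qed

lemma some_assign: "D \<noteq> {} \<Longrightarrow> \<exists>e. range e \<subseteq> (D::nat set)"
proof -
  assume "D \<noteq> {}"
  then obtain d where "d \<in> D" by blast
  then show ?thesis by (intro exI[of _ "\<lambda>_. d"]) auto
qed

lemma succ_not_limit: "is_succ a \<Longrightarrow> \<not> is_limit a" by (simp add: is_succ_def is_limit_def)
lemma succ_or_limit: "is_succ a \<or> is_limit a \<longleftrightarrow> a \<noteq> OZ" by (auto simp: is_succ_def is_limit_def)

definition child :: "(ordn \<Rightarrow> nat \<Rightarrow> ordn) \<Rightarrow> ordn \<Rightarrow> nat \<Rightarrow> ordn" where
  "child f a i = (if is_succ a then opred a else f a i)"

fun lab :: "(ordn \<Rightarrow> nat \<Rightarrow> ordn) \<Rightarrow> ordn \<Rightarrow> nat list \<Rightarrow> ordn" where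
  "lab f a [] = a"
| "lab f a (i # s) = lab f (child f a i) s"

lemma in_tau_Nil[simp]: "in_tau f a []" by (rule in_tau.root)

lemma in_tau_Cons: "in_tau f a (i # s) \<longleftrightarrow> a \<noteq> OZ \<and> in_tau f (child f a i) s"
proof
  assume "in_tau f a (i # s)"
  then show "a \<noteq> OZ \<and> in_tau f (child f a i) s"
    by cases (auto simp: child_def succ_or_limit[symmetric] dest: succ_not_limit)
next
  assume h: "a \<noteq> OZ \<and> in_tau f (child f a i) s"
  show "in_tau f a (i # s)"
  proof (cases "is_succ a")
    case True then show ?thesis using h by (auto simp: child_def intro: in_tau.succ)
  next
    case False
    then have "is_limit a" using h succ_or_limit by blast
    then show ?thesis using h False by (auto simp: child_def intro: in_tau.lim)
  qed
qed

lemma lab_snoc: "lab f a (s @ [i]) = child f (lab f a s) i"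
  by (induction s arbitrary: a) auto

lemma tau_snoc: "in_tau f a s \<Longrightarrow> in_tau f a (s @ [i]) \<longleftrightarrow> lab f a s \<noteq> OZ"
proof (induction s arbitrary: a)
  case Nil then show ?case by (simp add: in_tau_Cons)
next
  case (Cons j s) then show ?case by (simp add: in_tau_Cons)
qed

lemma tau_prefix: "in_tau f a (s @ [i]) \<Longrightarrow> in_tau f a s"
proof (induction s arbitrary: a)
  case Nil then show ?case by simp
next
  case (Cons j s) then show ?case by (simp add: in_tau_Cons)
qed

lemma rank0_iff: "rank0 (tau f a) s \<longleftrightarrow> in_tau f a s \<and> lab f a s = OZ"
  unfolding rank0_def tau_def using tau_snoc by auto

definition validfs :: "(ordn \<Rightarrow> nat \<Rightarrow> ordn) \<Rightarrow> (ordn \<Rightarrow> bool) \<Rightarrow> bool" where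
  "validfs f W \<longleftrightarrow> (\<forall>x. W x \<longrightarrow> nf x) \<and> (\<forall>x y. W x \<longrightarrow> nf y \<longrightarrow> ord_lt y x \<longrightarrow> W y) \<and>
     (\<forall>l. W l \<and> is_limit l \<longrightarrow> (\<forall>i. nf (f l i) \<and> ord_lt (f l i) l \<and> ord_lt (f l i) (f l (Suc i))) \<and>
        (\<forall>\<beta>. nf \<beta> \<and> ord_lt \<beta> l \<longrightarrow> (\<exists>i. ord_le \<beta> (f l i))))"

lemma iter_eq: "iter L xs p T a = (if a = OZ then fo_closure L T
      else if is_succ a then jump L xs p (cut (iter L xs p T) ord_rel a (opred a))
      else \<Union>{cut (iter L xs p T) ord_rel a \<beta> | \<beta>. nf \<beta> \<and> ord_lt \<beta> a})"
  unfolding iter_def by (subst wfrec[OF wf_ord_rel]) simp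

lemma iter_OZ: "iter L xs p T OZ = fo_closure L T"
  by (subst iter_eq) simp

lemma iter_succ: "nf a \<Longrightarrow> is_succ a \<Longrightarrow> iter L xs p T a = jump L xs p (iter L xs p T (opred a))"
proof -
  assume "nf a" "is_succ a"
  then have "(opred a, a) \<in> ord_rel" using nf_opred opred_lt
    by (auto simp: ord_rel_def is_succ_def)
  then show ?thesis using \<open>is_succ a\<close> by (subst iter_eq) (auto simp: is_succ_def cut_apply)
qed

lemma iter_lim: "nf a \<Longrightarrow> is_limit a \<Longrightarrow> iter L xs p T a = \<Union>{iter L xs p T \<beta> | \<beta>. nf \<beta> \<and> ord_lt \<beta> a}"
proof -
  assume "nf a" "is_limit a"
  then have "\<And>\<beta>. nf \<beta> \<and> ord_lt \<beta> a \<Longrightarrow> cut (iter L xs p T) ord_rel a \<beta> = iter L xs p T \<beta>"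
    by (auto simp: ord_rel_def cut_apply)
  then show ?thesis using \<open>is_limit a\<close> succ_not_limit
    by (subst iter_eq) (auto simp: is_limit_def, metis)
qed

locale setting =
  fixes f :: "ordn \<Rightarrow> nat \<Rightarrow> ordn" and W :: "ordn \<Rightarrow> bool" and \<alpha> :: ordn
  assumes valid: "validfs f W" and W\<alpha>: "W \<alpha>"
begin

abbreviation "tt \<equiv> tau f \<alpha>"
abbreviation "LL \<equiv> lang_tau tt"
abbreviation "TT \<equiv> T_tau tt"
abbreviation "itr \<equiv> iter LL [0] p_U TT"
abbreviation "lb \<equiv> lab f \<alpha>"
abbreviation "intau \<equiv> in_tau f \<alpha>"

lemma W_nf: "W x \<Longrightarrow> nf x" using valid unfolding validfs_def by blast
lemma W_down: "W x \<Longrightarrow> nf y \<Longrightarrow> ord_lt y x \<Longrightarrow> W y" using valid unfolding validfs_def by blast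
lemma W_lim: "W l \<Longrightarrow> is_limit l \<Longrightarrow> nf (f l i) \<and> ord_lt (f l i) l \<and> ord_lt (f l i) (f l (Suc i))"
  using valid unfolding validfs_def by blast
lemma W_cof: "W l \<Longrightarrow> is_limit l \<Longrightarrow> nf \<beta> \<Longrightarrow> ord_lt \<beta> l \<Longrightarrow> \<exists>i. ord_le \<beta> (f l i)"
  using valid unfolding validfs_def by blast

lemma child_W: "W x \<Longrightarrow> x \<noteq> OZ \<Longrightarrow> W (child f x i) \<and> ord_lt (child f x i) x"
proof -
  assume w: "W x" and x0: "x \<noteq> OZ"
  show ?thesis
  proof (cases "is_succ x")
    case True
    have "nf (opred x)" "ord_lt (opred x) x" using nf_opred W_nf[OF w] opred_lt x0 by auto
    then show ?thesis using True W_down[OF w] by (simp add: child_def)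
  next
    case False
    then have "is_limit x" using x0 succ_or_limit by blast
    then show ?thesis using False W_lim[OF w] W_down[OF w] by (simp add: child_def)
  qed
qed

lemma lab_W_gen: "W a \<Longrightarrow> in_tau f a s \<Longrightarrow> W (lab f a s) \<and> (s \<noteq> [] \<longrightarrow> ord_lt (lab f a s) a)"
proof (induction s arbitrary: a)
  case Nil then show ?case by simp
next
  case (Cons i s)
  have a0: "a \<noteq> OZ" and ch: "in_tau f (child f a i) s" using Cons.prems by (auto simp: in_tau_Cons)
  have cw: "W (child f a i) \<and> ord_lt (child f a i) a" using child_W Cons.prems(1) a0 by blast
  then have "W (lab f (child f a i) s) \<and> (s \<noteq> [] \<longrightarrow> ord_lt (lab f (child f a i) s) (child f a i))"
    using Cons.IH ch by blast
  then show ?case using cw ord_lt_trans by auto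
qed

lemma lab_W: "intau s \<Longrightarrow> W (lb s)" using lab_W_gen W\<alpha> by blast
lemma lab_lt: "intau s \<Longrightarrow> s \<noteq> [] \<Longrightarrow> ord_lt (lb s) \<alpha>" using lab_W_gen W\<alpha> by blast
lemma lab_nf: "intau s \<Longrightarrow> nf (lb s)" using lab_W W_nf by blast

lemma lab_child_lt: "intau (s @ [i]) \<Longrightarrow> ord_lt (lb (s @ [i])) (lb s)"
proof -
  assume h: "intau (s @ [i])"
  then have "intau s" by (rule tau_prefix)
  then have "lb s \<noteq> OZ" using tau_snoc h by blast
  then show ?thesis using child_W[OF lab_W[OF \<open>intau s\<close>]] by (simp add: lab_snoc)
qed

lemma fs_mono: "W x \<Longrightarrow> is_limit x \<Longrightarrow> i \<le> m \<Longrightarrow> ord_le (f x i) (f x m)"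
proof (induction m)
  case 0 then show ?case by simp
next
  case (Suc m)
  show ?case
  proof (cases "i = Suc m")
    case True then show ?thesis by simp
  next
    case False
    then have "ord_le (f x i) (f x m)" using Suc by simp
    moreover have "ord_lt (f x m) (f x (Suc m))" using W_lim[OF Suc.prems(1,2), of m] by blast
    ultimately show ?thesis unfolding ord_le_def using ord_le_lt_trans[of "f x i" "f x m" "f x (Suc m)"]
      by (simp add: ord_le_def)
  qed
qed

lemma child_ge: "W x \<Longrightarrow> nf \<beta> \<Longrightarrow> ord_lt \<beta> x \<Longrightarrow> \<exists>m0. \<forall>m\<ge>m0. ord_le \<beta> (child f x m)"
proof -
  assume w: "W x" and nb: "nf \<beta>" and lt: "ord_lt \<beta> x"
  show ?thesis
  proof (cases "is_succ x")
    case True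
    then show ?thesis using succ_le_opred[OF True lt] by (simp add: child_def)
  next
    case False
    have x0: "x \<noteq> OZ" using lt by auto
    then have lim: "is_limit x" using False succ_or_limit by blast
    obtain i where i: "ord_le \<beta> (f x i)" using W_cof[OF w lim nb lt] by blast
    have "\<forall>m\<ge>i. ord_le \<beta> (child f x m)"
    proof (intro allI impI)
      fix m assume "i \<le> m"
      then have "ord_le (f x i) (f x m)" by (rule fs_mono[OF w lim])
      then have "ord_le \<beta> (f x m)" using i ord_le_trans by blast
      then show "ord_le \<beta> (child f x m)" using False by (simp add: child_def)
    qed
    then show ?thesis by blast
  qed
qed

lemma mem_LL_P: "P s \<in> LL \<longleftrightarrow> intau s \<and> s \<noteq> []"
  by (auto simp: lang_tau_def tau_def)
lemma mem_LL_U: "U j \<in> LL"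
  by (auto simp: lang_tau_def)

definition modelT :: "nat set \<Rightarrow> (psym \<Rightarrow> nat set) \<Rightarrow> bool" where
  "modelT D I \<longleftrightarrow>
    (\<forall>s i. intau (s @ [i]) \<and> s \<noteq> [] \<longrightarrow> D \<inter> I (P (s @ [i])) = {} \<longrightarrow> D \<inter> I (P s) \<subseteq> I (U i)) \<and>
    (\<forall>s. intau s \<and> s \<noteq> [] \<and> lb s = OZ \<longrightarrow> (\<forall>i. D \<inter> I (P s) \<subseteq> I (U i))) \<and>
    (\<forall>k. GE D I k)"

lemma holds_ax1: "D \<noteq> {} \<Longrightarrow> holds D I (Imp (Neg (Ex 0 (Atom A 0))) (All 0 (Imp (Atom B 0) (Atom C 0))))
   \<longleftrightarrow> (D \<inter> I A = {} \<longrightarrow> D \<inter> I B \<subseteq> I C)"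
proof -
  assume D0: "D \<noteq> {}"
  obtain e :: "nat \<Rightarrow> nat" where e: "range e \<subseteq> D" using some_assign[OF D0] ..
  show ?thesis by (subst holds_sentence[OF _ e]) auto
qed

lemma holds_ax2: "D \<noteq> {} \<Longrightarrow> holds D I (All 0 (Imp (Atom B 0) (Atom C 0))) \<longleftrightarrow> D \<inter> I B \<subseteq> I C"
proof -
  assume D0: "D \<noteq> {}"
  obtain e :: "nat \<Rightarrow> nat" where e: "range e \<subseteq> D" using some_assign[OF D0] ..
  show ?thesis by (subst holds_sentence[OF _ e]) auto
qed

lemma holds_ge: "D \<noteq> {} \<Longrightarrow> holds D I (exists_ge k) \<longleftrightarrow> GE D I k"
proof -
  assume D0: "D \<noteq> {}"
  obtain e :: "nat \<Rightarrow> nat" where e: "range e \<subseteq> D" using some_assign[OF D0] ..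
  show ?thesis by (subst holds_sentence[OF fv_exists_ge e]) (simp add: sat_exists_ge)
qed

lemma T_holds: "D \<noteq> {} \<Longrightarrow> (\<forall>\<sigma>\<in>TT. holds D I \<sigma>) \<longleftrightarrow> modelT D I"
proof -
  assume D: "D \<noteq> {}"
  have "(\<forall>\<sigma>\<in>TT. holds D I \<sigma>) \<longleftrightarrow>
     (\<forall>s i. s @ [i] \<in> tt \<and> s \<noteq> [] \<longrightarrow> holds D I (Imp (Neg (Ex 0 (Atom (P (s @ [i])) 0))) (All 0 (Imp (Atom (P s) 0) (Atom (U i) 0))))) \<and>
     (\<forall>s i. rank0 tt s \<and> s \<noteq> [] \<longrightarrow> holds D I (All 0 (Imp (Atom (P s) 0) (Atom (U i) 0)))) \<and>
     (\<forall>k. holds D I (exists_ge k))"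
    unfolding T_tau_def by blast
  also have "\<dots> \<longleftrightarrow>
     (\<forall>s i. s @ [i] \<in> tt \<and> s \<noteq> [] \<longrightarrow> (D \<inter> I (P (s @ [i])) = {} \<longrightarrow> D \<inter> I (P s) \<subseteq> I (U i))) \<and>
     (\<forall>s i. rank0 tt s \<and> s \<noteq> [] \<longrightarrow> D \<inter> I (P s) \<subseteq> I (U i)) \<and>
     (\<forall>k. GE D I k)"
    by (simp only: holds_ax1[OF D] holds_ax2[OF D] holds_ge[OF D])
  also have "\<dots> \<longleftrightarrow> modelT D I"
    unfolding modelT_def rank0_iff unfolding tau_def mem_Collect_eq by blast
  finally show ?thesis .
qed

lemma T_sent: "\<sigma> \<in> TT \<Longrightarrow> sentence LL \<sigma>"
proof -
  assume "\<sigma> \<in> TT"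
  then consider (a) s i where "\<sigma> = Imp (Neg (Ex 0 (Atom (P (s @ [i])) 0))) (All 0 (Imp (Atom (P s) 0) (Atom (U i) 0)))"
        "s @ [i] \<in> tt" "s \<noteq> []"
    | (b) s i where "\<sigma> = All 0 (Imp (Atom (P s) 0) (Atom (U i) 0))" "rank0 tt s" "s \<noteq> []"
    | (c) k where "\<sigma> = exists_ge k"
    unfolding T_tau_def by blast
  then show ?thesis
  proof cases
    case a
    then have "intau (s @ [i])" "intau s" using tau_prefix by (auto simp: tau_def)
    then show ?thesis using a by (auto simp: sentence_def in_lang_def mem_LL_P mem_LL_U)
  next
    case b
    then have "intau s" by (auto simp: rank0_iff)
    then show ?thesis using b by (auto simp: sentence_def in_lang_def mem_LL_P mem_LL_U)
  next
    case c
    have "preds (exists_ge k) \<subseteq> LL" using preds_exists_ge[of k] mem_LL_U by blast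
    then show ?thesis using c fv_exists_ge by (simp add: sentence_def in_lang_def)
  qed
qed

definition inK :: "(ordn \<Rightarrow> bool) \<Rightarrow> nat set \<Rightarrow> (psym \<Rightarrow> nat set) \<Rightarrow> bool" where
  "inK Z D I \<longleftrightarrow> D \<noteq> {} \<and> modelT D I \<and> (\<forall>s. intau s \<and> s \<noteq> [] \<and> Z (lb s) \<longrightarrow> D \<inter> I (P s) = {})"

end

lemma finite_vim: "finite A \<Longrightarrow> inj g \<Longrightarrow> finite {x. g x \<in> A}"
  using finite_vimageI[of A g] by (simp add: vimage_def)

lemma fo_closure_holds: "\<sigma> \<in> fo_closure L S \<Longrightarrow> D \<noteq> {} \<Longrightarrow> (\<forall>\<psi>\<in>S. holds D I \<psi>) \<Longrightarrow> holds D I \<sigma>"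
  unfolding fo_closure_def entails_def by blast

lemma closure_sub: "(\<forall>\<sigma>\<in>S. sentence L \<sigma>) \<Longrightarrow> S \<subseteq> fo_closure L (S \<union> X)"
  unfolding fo_closure_def entails_def by blast

lemma iso_holds:
  assumes inj: "inj_on h D" and D0: "D \<noteq> {}" and pr: "\<forall>R. \<forall>x\<in>D. x \<in> I R \<longleftrightarrow> h x \<in> I2 R"
    and fv0: "fv \<sigma> = {}"
  shows "holds D I \<sigma> \<longleftrightarrow> holds (h ` D) I2 \<sigma>"
proof -
  obtain e :: "nat \<Rightarrow> nat" where e: "range e \<subseteq> D" using some_assign[OF D0] ..
  have e2: "range (h \<circ> e) \<subseteq> h ` D" using e by auto
  have "holds D I \<sigma> \<longleftrightarrow> sat D I e \<sigma>" by (rule holds_sentence[OF fv0 e])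
  also have "\<dots> \<longleftrightarrow> sat (h ` D) I2 (h \<circ> e) \<sigma>" by (rule sat_iso[OF inj]) (use pr e in auto)
  also have "\<dots> \<longleftrightarrow> holds (h ` D) I2 \<sigma>" by (rule holds_sentence[OF fv0 e2, symmetric])
  finally show ?thesis .
qed

context setting
begin

lemma inK_mono: "(\<And>x. Z x \<Longrightarrow> Z' x) \<Longrightarrow> inK Z' D I \<Longrightarrow> inK Z D I"
  unfolding inK_def by blast

lemma inK_modelT: "inK Z D I \<Longrightarrow> D \<noteq> {} \<and> modelT D I"
  unfolding inK_def by blast

lemma inK_kill: "inK Z D I \<Longrightarrow> intau s \<Longrightarrow> s \<noteq> [] \<Longrightarrow> Z (lb s) \<Longrightarrow> D \<inter> I (P s) = {}"
  unfolding inK_def by blast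

lemma cases3: obtains "\<gamma> = OZ" | "is_succ \<gamma>" | "is_limit \<gamma>"
  using succ_or_limit by blast

lemma opred_W: "W \<gamma> \<Longrightarrow> is_succ \<gamma> \<Longrightarrow> W (opred \<gamma>) \<and> (opred \<gamma>, \<gamma>) \<in> ord_rel \<and> ord_lt (opred \<gamma>) \<gamma>"
proof -
  assume w: "W \<gamma>" and s: "is_succ \<gamma>"
  have n: "nf (opred \<gamma>)" using nf_opred W_nf[OF w] by blast
  have l: "ord_lt (opred \<gamma>) \<gamma>" using opred_lt s by (auto simp: is_succ_def)
  show ?thesis using W_down[OF w n l] n l W_nf[OF w] by (simp add: ord_rel_def)
qed

lemma itr_sent: "W \<gamma> \<Longrightarrow> \<sigma> \<in> itr \<gamma> \<Longrightarrow> sentence LL \<sigma>"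
proof (induction \<gamma> arbitrary: \<sigma> rule: wf_induct[OF wf_ord_rel])
  case (1 \<gamma>)
  show ?case
  proof (cases \<gamma> rule: cases3)
    case 1 then show ?thesis using "1.prems" by (simp add: iter_OZ fo_closure_def)
  next
    case 2 then show ?thesis using "1.prems" W_nf by (simp add: iter_succ jump_def fo_closure_def)
  next
    case 3
    then obtain \<beta> where b: "nf \<beta>" "ord_lt \<beta> \<gamma>" "\<sigma> \<in> itr \<beta>"
      using "1.prems" W_nf iter_lim by auto
    have "W \<beta>" using W_down "1.prems" b by blast
    moreover have "(\<beta>, \<gamma>) \<in> ord_rel" using b W_nf "1.prems" by (simp add: ord_rel_def)
    ultimately show ?thesis using "1.IH" b by blast
  qed
qed

lemma itr_mono: "W \<gamma> \<Longrightarrow> nf \<beta> \<Longrightarrow> ord_le \<beta> \<gamma> \<Longrightarrow> itr \<beta> \<subseteq> itr \<gamma>"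
proof (induction \<gamma> arbitrary: \<beta> rule: wf_induct[OF wf_ord_rel])
  case (1 \<gamma>)
  show ?case
  proof (cases "\<beta> = \<gamma>")
    case True then show ?thesis by simp
  next
    case False
    then have lt: "ord_lt \<beta> \<gamma>" using "1.prems" by (simp add: ord_le_def)
    show ?thesis
    proof (cases \<gamma> rule: cases3)
      case 1 then show ?thesis using lt by simp
    next
      case 2
      have o: "W (opred \<gamma>) \<and> (opred \<gamma>, \<gamma>) \<in> ord_rel \<and> ord_lt (opred \<gamma>) \<gamma>"
        using opred_W "1.prems" 2 by blast
      have "ord_le \<beta> (opred \<gamma>)" using succ_le_opred[OF 2 lt] .
      then have s1: "itr \<beta> \<subseteq> itr (opred \<gamma>)" using "1.IH" o "1.prems" by blast
      have "itr (opred \<gamma>) \<subseteq> itr \<gamma>"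
        unfolding iter_succ[OF W_nf[OF "1.prems"(1)] 2] jump_def
        by (rule closure_sub) (use itr_sent o in blast)
      then show ?thesis using s1 by blast
    next
      case 3
      then show ?thesis using iter_lim[OF W_nf[OF "1.prems"(1)] 3] lt "1.prems" by blast
    qed
  qed
qed

lemma TT_sub: "W \<gamma> \<Longrightarrow> TT \<subseteq> itr \<gamma>"
proof -
  assume w: "W \<gamma>"
  have "TT \<subseteq> itr OZ" unfolding iter_OZ using closure_sub[of TT LL "{}"] T_sent by auto
  also have "\<dots> \<subseteq> itr \<gamma>" by (rule itr_mono[OF w]) auto
  finally show ?thesis .
qed


lemma perturb_core:
  assumes Wb: "W \<beta>" and K: "inK (\<lambda>x. ord_le x \<beta>) D I" and cD: "c \<notin> D"
    and lang: "in_lang LL \<phi>" and rng: "range e \<subseteq> D" and sat0: "sat D I e \<phi>"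
  shows "\<exists>D' I' m. inK (\<lambda>x. ord_lt x \<beta>) D' I' \<and> range e \<subseteq> D' \<and> sat D' I' e \<phi> \<and> e 0 \<notin> I' (U m)"
proof -
  define a where "a = e 0"
  have aD: "a \<in> D" using rng a_def by auto
  define A where "A = preds \<phi>"
  have finA: "finite A" unfolding A_def by (rule finite_preds)
  have AL: "A \<subseteq> LL" using lang unfolding A_def in_lang_def .
  have D0: "D \<noteq> {}" and MT: "modelT D I" using inK_modelT[OF K] by auto
  have kill: "\<And>s. intau s \<Longrightarrow> s \<noteq> [] \<Longrightarrow> ord_le (lb s) \<beta> \<Longrightarrow> D \<inter> I (P s) = {}"
    using inK_kill[OF K] by blast
  have nb: "nf \<beta>" using W_nf[OF Wb] .
  define J where "J = {j. U j \<in> A}"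
  have finJ: "finite J" unfolding J_def by (rule finite_vim[OF finA]) (simp add: inj_on_def)
  define Sa where "Sa = {s. P s \<in> A \<and> a \<in> I (P s)}"
  have finSa: "finite Sa"
  proof -
    have "Sa \<subseteq> {s. P s \<in> A}" unfolding Sa_def by auto
    moreover have "finite {s. P s \<in> A}" by (rule finite_vim[OF finA]) (simp add: inj_on_def)
    ultimately show ?thesis by (rule finite_subset)
  qed
  have Sa_props: "\<And>s. s \<in> Sa \<Longrightarrow> intau s \<and> s \<noteq> [] \<and> ord_lt \<beta> (lb s)"
  proof -
    fix s assume s: "s \<in> Sa"
    then have "P s \<in> LL" using AL Sa_def by auto
    then have ts: "intau s" "s \<noteq> []" using mem_LL_P by auto
    have "D \<inter> I (P s) \<noteq> {}" using s aD Sa_def by auto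
    then have "\<not> ord_le (lb s) \<beta>" using kill ts by blast
    then show "intau s \<and> s \<noteq> [] \<and> ord_lt \<beta> (lb s)" using ts ord_not_le by blast
  qed
  have "\<forall>s\<in>Sa. \<exists>m0. \<forall>m\<ge>m0. ord_le \<beta> (lb (s @ [m]))"
  proof
    fix s assume s: "s \<in> Sa"
    then have "W (lb s)" "ord_lt \<beta> (lb s)" using Sa_props lab_W by auto
    then obtain m0 where "\<forall>m\<ge>m0. ord_le \<beta> (child f (lb s) m)" using child_ge nb by blast
    then show "\<exists>m0. \<forall>m\<ge>m0. ord_le \<beta> (lb (s @ [m]))" by (auto simp: lab_snoc)
  qed
  then obtain M where M: "\<forall>s\<in>Sa. \<forall>m\<ge>M s. ord_le \<beta> (lb (s @ [m]))" by metis
  define Bad where "Bad = J \<union> (\<Union>s\<in>Sa. {m. P (s @ [m]) \<in> A}) \<union> (\<Union>s\<in>Sa. {..<M s})"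
  have finBad: "finite Bad"
  proof -
    have "\<And>s. finite {m. P (s @ [m]) \<in> A}"
      by (rule finite_vim[OF finA]) (simp add: inj_on_def)
    then show ?thesis unfolding Bad_def using finJ finSa by auto
  qed
  obtain m where mB: "m \<notin> Bad" using ex_new_if_finite[OF infinite_UNIV_nat finBad] by blast
  have mJ: "m \<notin> J" using mB Bad_def by auto
  have mA: "\<And>s. s \<in> Sa \<Longrightarrow> P (s @ [m]) \<notin> A" using mB Bad_def by auto
  have mge: "\<And>s. s \<in> Sa \<Longrightarrow> ord_le \<beta> (lb (s @ [m]))"
  proof -
    fix s assume "s \<in> Sa"
    then have "\<not> m < M s" using mB Bad_def by auto
    then show "ord_le \<beta> (lb (s @ [m]))" using M \<open>s \<in> Sa\<close> by auto
  qed
  define X where "X = {d\<in>D. \<forall>j\<in>J. d \<in> I (U j)}"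
  have infX: "infinite X"
  proof
    assume finX: "finite X"
    obtain K where K: "\<forall>j\<in>J. j \<le> K" using finJ finite_nat_set_iff_bounded_le by blast
    have "GE D I (card X + 1 + K)" using MT unfolding modelT_def by blast
    then obtain S where S: "finite S" "card S = card X + 1 + K" "S \<subseteq> D"
      "\<forall>x\<in>S. \<forall>j\<le>card X + 1 + K. x \<in> I (U j)" unfolding GE_def by blast
    have "S \<subseteq> X" using S K unfolding X_def by fastforce
    then have "card S \<le> card X" using finX card_mono by blast
    then show False using S by simp
  qed
  define typ0 where "typ0 d = {R\<in>A. d \<in> I R}" for d
  have "finite (typ0 ` X)"
  proof (rule finite_subset)
    show "typ0 ` X \<subseteq> Pow A" unfolding typ0_def by auto
  qed (use finA in simp)
  then obtain d0 where d0X: "d0 \<in> X" and infT: "infinite {d\<in>X. typ0 d = typ0 d0}"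
    using pigeonhole_infinite[OF infX] by blast
  define D' where "D' = insert c D"
  define I' where "I' R = (case R of U j \<Rightarrow> (if j = m then I (U j) \<inter> D - {a} else I (U j) \<inter> D) \<union> {c}
     | P t \<Rightarrow> (if P t \<in> A then I (P t) \<inter> D \<union> (if d0 \<in> I (P t) then {c} else {})
               else (I (P t) \<inter> D - {a}) \<union> (if a \<in> I (P t) \<or> (\<exists>s\<in>Sa. t = s @ [m]) then {c} else {})))" for R
  have I'U: "\<And>j. I' (U j) = (if j = m then I (U j) \<inter> D - {a} else I (U j) \<inter> D) \<union> {c}"
    unfolding I'_def by simp
  have I'P: "\<And>t. I' (P t) = (if P t \<in> A then I (P t) \<inter> D \<union> (if d0 \<in> I (P t) then {c} else {})
               else (I (P t) \<inter> D - {a}) \<union> (if a \<in> I (P t) \<or> (\<exists>s\<in>Sa. t = s @ [m]) then {c} else {}))"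
    unfolding I'_def by simp
  have cD': "c \<in> D'" unfolding D'_def by simp
  have ac: "a \<noteq> c" using aD cD by auto
  have d0D: "d0 \<in> D" using d0X X_def by auto
  have cU: "\<And>j. c \<in> I' (U j)" using I'U by simp
  have agree: "\<forall>R\<in>A. \<forall>x\<in>D. x \<in> I' R \<longleftrightarrow> x \<in> I R"
  proof (intro ballI)
    fix R x assume R: "R \<in> A" and x: "x \<in> D"
    have xc: "x \<noteq> c" using x cD by auto
    show "x \<in> I' R \<longleftrightarrow> x \<in> I R"
    proof (cases R)
      case (U j)
      then have "j \<noteq> m" using R mJ J_def by auto
      then show ?thesis using U I'U x xc by simp
    next
      case (P t)
      then show ?thesis using R I'P x xc by simp
    qed
  qed
  have pool: "{d\<in>X. typ0 d = typ0 d0} \<subseteq> {d\<in>D. \<forall>R\<in>A. d \<in> I R \<longleftrightarrow> c \<in> I' R}"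
  proof
    fix d assume d: "d \<in> {d\<in>X. typ0 d = typ0 d0}"
    have dD: "d \<in> D" using d X_def by auto
    have "\<forall>R\<in>A. d \<in> I R \<longleftrightarrow> c \<in> I' R"
    proof
      fix R assume R: "R \<in> A"
      have "d \<in> I R \<longleftrightarrow> d0 \<in> I R" using d R unfolding typ0_def by (auto simp: set_eq_iff)
      moreover have "c \<in> I' R \<longleftrightarrow> d0 \<in> I R"
      proof (cases R)
        case (U j)
        then have "j \<in> J" using R J_def by auto
        then show ?thesis using U cU d0X X_def by auto
      next
        case (P t)
        then show ?thesis using R I'P cD by auto
      qed
      ultimately show "d \<in> I R \<longleftrightarrow> c \<in> I' R" by simp
    qed
    then show "d \<in> {d\<in>D. \<forall>R\<in>A. d \<in> I R \<longleftrightarrow> c \<in> I' R}" using dD by simp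
  qed
  have infpool: "infinite {d\<in>D. \<forall>R\<in>A. d \<in> I R \<longleftrightarrow> c \<in> I' R}"
    using infT pool finite_subset by blast
  have satD': "sat D' I' e \<phi>"
    unfolding D'_def using add_elem[OF cD agree infpool, of \<phi> e] rng sat0 A_def by simp
  have aU: "e 0 \<notin> I' (U m)" using I'U ac a_def by simp
  have rng': "range e \<subseteq> D'" using rng D'_def by auto
  have killD: "\<And>t. intau t \<Longrightarrow> t \<noteq> [] \<Longrightarrow> ord_lt (lb t) \<beta> \<Longrightarrow> D' \<inter> I' (P t) = {}"
  proof -
    fix t assume t: "intau t" "t \<noteq> []" "ord_lt (lb t) \<beta>"
    have E: "D \<inter> I (P t) = {}" using kill t by (simp add: ord_le_def)
    have "c \<notin> I' (P t)"
    proof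
      assume cin: "c \<in> I' (P t)"
      show False
      proof (cases "P t \<in> A")
        case True
        then have "d0 \<in> I (P t)" using cin I'P cD by (auto split: if_splits)
        then show False using E d0D by auto
      next
        case False
        then have "a \<in> I (P t) \<or> (\<exists>s\<in>Sa. t = s @ [m])" using cin I'P cD by (auto split: if_splits)
        then show False
        proof
          assume "a \<in> I (P t)" then show False using E aD by auto
        next
          assume "\<exists>s\<in>Sa. t = s @ [m]"
          then obtain s where "s \<in> Sa" "t = s @ [m]" by blast
          then have "ord_le \<beta> (lb t)" using mge by blast
          from ord_le_lt_trans[OF this t(3)] show False by simp
        qed
      qed
    qed
    moreover have "D \<inter> I' (P t) = {}" using E I'P cD by auto
    ultimately show "D' \<inter> I' (P t) = {}" unfolding D'_def by auto
  qed
  have ax1: "\<And>t i. intau (t @ [i]) \<Longrightarrow> t \<noteq> [] \<Longrightarrow> D' \<inter> I' (P (t @ [i])) = {} \<Longrightarrow> D' \<inter> I' (P t) \<subseteq> I' (U i)"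
  proof -
    fix t i assume ti: "intau (t @ [i])" "t \<noteq> []" and E: "D' \<inter> I' (P (t @ [i])) = {}"
    have E0: "D \<inter> I (P (t @ [i])) = {}"
    proof (rule ccontr)
      assume "D \<inter> I (P (t @ [i])) \<noteq> {}"
      then obtain y where y: "y \<in> D" "y \<in> I (P (t @ [i]))" by blast
      have "y \<in> I' (P (t @ [i])) \<or> c \<in> I' (P (t @ [i]))"
        using y I'P by (cases "P (t @ [i]) \<in> A"; cases "y = a") auto
      then show False using E y D'_def by auto
    qed
    have N: "D \<inter> I (P t) \<subseteq> I (U i)" using MT ti E0 unfolding modelT_def by blast
    show "D' \<inter> I' (P t) \<subseteq> I' (U i)"
    proof
      fix x assume x: "x \<in> D' \<inter> I' (P t)"
      show "x \<in> I' (U i)"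
      proof (cases "x = c")
        case True then show ?thesis using cU by simp
      next
        case False
        then have xD: "x \<in> D" and xP: "x \<in> I (P t)" and xa: "P t \<notin> A \<Longrightarrow> x \<noteq> a"
          using x D'_def I'P by (auto split: if_splits)
        have xU: "x \<in> I (U i)" using N xD xP by blast
        show ?thesis
        proof (cases "i = m \<and> x = a")
          case True
          then have "P t \<in> A" using xa by blast
          then have tS: "t \<in> Sa" using True xP Sa_def by auto
          then have "P (t @ [m]) \<notin> A" using mA by blast
          then have "c \<in> I' (P (t @ [m]))" using I'P tS by auto
          then show ?thesis using E True cD' by auto
        next
          case False
          then show ?thesis using I'U xU xD by auto
        qed
      qed
    qed
  qed
  have ax2: "\<And>t i. intau t \<Longrightarrow> t \<noteq> [] \<Longrightarrow> lb t = OZ \<Longrightarrow> D' \<inter> I' (P t) \<subseteq> I' (U i)"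
  proof -
    fix t i assume t: "intau t" "t \<noteq> []" "lb t = OZ"
    have "D \<inter> I (P t) = {}" using kill t by simp
    then have "D \<inter> I' (P t) = {}" using I'P cD by auto
    then show "D' \<inter> I' (P t) \<subseteq> I' (U i)" using cU D'_def by auto
  qed
  have ax3: "\<And>k. GE D' I' k"
  proof -
    fix k
    have "GE D I k" using MT unfolding modelT_def by blast
    then obtain S where S: "finite S" "card S = k" "S \<subseteq> D" "\<forall>x\<in>S. \<forall>j\<le>k. x \<in> I (U j)"
      unfolding GE_def by blast
    let ?S2 = "insert c (S - {a})"
    have cS: "c \<notin> S - {a}" using S cD by auto
    have "card ?S2 = Suc (card (S - {a}))" using S(1) cS by simp
    moreover have "card S \<le> Suc (card (S - {a}))"
      using S(1) by (metis card_Diff1_le card_Suc_Diff1 le_SucI order_refl card_Diff_singleton_if)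
    ultimately have "k \<le> card ?S2" using S by simp
    then obtain T where T: "T \<subseteq> ?S2" "card T = k" "finite T" by (rule obtain_subset_with_card_n)
    have "T \<subseteq> D'" using T S D'_def by auto
    moreover have "\<forall>x\<in>T. \<forall>j\<le>k. x \<in> I' (U j)"
    proof (intro ballI allI impI)
      fix x j assume x: "x \<in> T" and j: "j \<le> k"
      show "x \<in> I' (U j)"
      proof (cases "x = c")
        case True then show ?thesis using cU by simp
      next
        case False
        then have "x \<in> S" "x \<noteq> a" using x T by auto
        then show ?thesis using S j I'U by auto
      qed
    qed
    ultimately show "GE D' I' k" unfolding GE_def using T by blast
  qed
  have "modelT D' I'" unfolding modelT_def using ax1 ax2 ax3 by blast
  then have "inK (\<lambda>x. ord_lt x \<beta>) D' I'" unfolding inK_def using killD D'_def by blast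
  then show ?thesis using rng' satD' aU by blast
qed

end

lemma exs0: "exs [0] \<phi> = Ex 0 \<phi>" by (simp add: exs_def)
lemma alls0: "alls [0] \<phi> = All 0 \<phi>" by (simp add: alls_def)

lemma holds_negex: "D \<noteq> {} \<Longrightarrow> holds D I (Neg (exs [0] (Atom R 0))) \<longleftrightarrow> D \<inter> I R = {}"
proof -
  assume D0: "D \<noteq> {}"
  obtain e :: "nat \<Rightarrow> nat" where e: "range e \<subseteq> D" using some_assign[OF D0] ..
  show ?thesis by (subst holds_sentence[OF _ e]) (auto simp: exs0)
qed

lemma entails_mono: "entails S1 \<sigma> \<Longrightarrow> S1 \<subseteq> S2 \<Longrightarrow> entails S2 \<sigma>"
  unfolding entails_def by blast

lemma jump_mono: "S1 \<subseteq> S2 \<Longrightarrow> jump L xs p S1 \<subseteq> jump L xs p S2"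
proof -
  assume sub: "S1 \<subseteq> S2"
  have "pset L xs p S1 \<subseteq> pset L xs p S2"
    unfolding pset_def using entails_mono[OF _ sub] by blast
  then have "S1 \<union> pset L xs p S1 \<subseteq> S2 \<union> pset L xs p S2" using sub by blast
  then show ?thesis unfolding jump_def fo_closure_def using entails_mono by blast
qed

context setting
begin

lemma perturb:
  assumes Wb: "W \<beta>" and K: "inK (\<lambda>x. ord_le x \<beta>) D I" and lang: "in_lang LL \<phi>"
    and rng: "range e \<subseteq> D" and s0: "sat D I e \<phi>"
  shows "\<exists>D' I' e' m. inK (\<lambda>x. ord_lt x \<beta>) D' I' \<and> range e' \<subseteq> D' \<and> sat D' I' e' \<phi> \<and> e' 0 \<notin> I' (U m)"
proof -
  define h where "h = (\<lambda>x::nat. 2 * x)"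
  have inj: "inj_on h D" unfolding h_def by (simp add: inj_on_def)
  define I2 where "I2 R = h ` (I R \<inter> D)" for R
  have pr: "\<forall>R. \<forall>x\<in>D. x \<in> I R \<longleftrightarrow> h x \<in> I2 R"
    unfolding I2_def h_def by auto
  have D0: "D \<noteq> {}" and MT: "modelT D I" using inK_modelT[OF K] by auto
  have sat2: "sat (h ` D) I2 (h \<circ> e) \<phi>" using sat_iso[OF inj, of \<phi> I I2 e] pr rng s0 by blast
  have rng2: "range (h \<circ> e) \<subseteq> h ` D" using rng by auto
  have D20: "h ` D \<noteq> {}" using D0 by simp
  have "\<forall>\<sigma>\<in>TT. holds D I \<sigma>" using T_holds[OF D0] MT by blast
  then have "\<forall>\<sigma>\<in>TT. holds (h ` D) I2 \<sigma>"
    using iso_holds[OF inj D0 pr] T_sent unfolding sentence_def by blast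
  then have MT2: "modelT (h ` D) I2" using T_holds[OF D20] by blast
  have kill2: "\<forall>s. intau s \<and> s \<noteq> [] \<and> ord_le (lb s) \<beta> \<longrightarrow> h ` D \<inter> I2 (P s) = {}"
  proof (intro allI impI)
    fix s assume "intau s \<and> s \<noteq> [] \<and> ord_le (lb s) \<beta>"
    then have "D \<inter> I (P s) = {}" using inK_kill[OF K] by blast
    then show "h ` D \<inter> I2 (P s) = {}" unfolding I2_def by auto
  qed
  have K2: "inK (\<lambda>x. ord_le x \<beta>) (h ` D) I2" unfolding inK_def using D20 MT2 kill2 by blast
  have c: "1 \<notin> h ` D"
  proof
    assume "1 \<in> h ` D"
    then obtain x where "(1::nat) = 2 * x" unfolding h_def by auto
    then show False by presburger
  qed
  obtain D' I' m where r: "inK (\<lambda>x. ord_lt x \<beta>) D' I'" "range (h \<circ> e) \<subseteq> D'"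
     "sat D' I' (h \<circ> e) \<phi>" "(h \<circ> e) 0 \<notin> I' (U m)"
    using perturb_core[OF Wb K2 c lang rng2 sat2] by blast
  then show ?thesis by blast
qed

lemma pset_holds:
  assumes Wb: "W \<beta>" and K: "inK (\<lambda>x. ord_le x \<beta>) D I"
    and IH: "\<And>D' I'. inK (\<lambda>x. ord_lt x \<beta>) D' I' \<Longrightarrow> \<forall>\<sigma>\<in>itr \<beta>. holds D' I' \<sigma>"
    and psi: "\<psi> \<in> pset LL [0] p_U (itr \<beta>)"
  shows "holds D I \<psi>"
proof -
  obtain \<phi> where \<psi>: "\<psi> = Neg (exs [0] \<phi>)" and lang: "in_lang LL \<phi>"
    and ent: "\<forall>\<chi>\<in>p_U. entails (itr \<beta>) (alls [0] (Imp \<phi> \<chi>))"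
    using psi unfolding pset_def by blast
  show ?thesis unfolding holds_def
  proof (intro allI impI)
    fix e :: "nat \<Rightarrow> nat" assume rng: "range e \<subseteq> D"
    show "sat D I e \<psi>"
    proof (rule ccontr)
      assume "\<not> sat D I e \<psi>"
      then obtain d where d: "d \<in> D" "sat D I (e(0 := d)) \<phi>" using \<psi> by (auto simp: exs0)
      have rng1: "range (e(0 := d)) \<subseteq> D" using rng d by auto
      obtain D' I' e' m where r: "inK (\<lambda>x. ord_lt x \<beta>) D' I'" "range e' \<subseteq> D'"
        "sat D' I' e' \<phi>" "e' 0 \<notin> I' (U m)"
        using perturb[OF Wb K lang rng1 d(2)] by blast
      have D'0: "D' \<noteq> {}" using inK_modelT[OF r(1)] by blast
      have "Atom (U m) 0 \<in> p_U" unfolding p_U_def by blast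
      then have "entails (itr \<beta>) (All 0 (Imp \<phi> (Atom (U m) 0)))" using ent by (simp add: alls0)
      then have "holds D' I' (All 0 (Imp \<phi> (Atom (U m) 0)))"
        using IH[OF r(1)] D'0 unfolding entails_def by blast
      then have "sat D' I' e' (All 0 (Imp \<phi> (Atom (U m) 0)))" using r(2) unfolding holds_def by blast
      moreover have "e' 0 \<in> D'" using r(2) by auto
      ultimately have "sat D' I' (e'(0 := e' 0)) \<phi> \<longrightarrow> e' 0 \<in> I' (U m)" by auto
      then show False using r(3,4) by simp
    qed
  qed
qed

lemma G: "W \<gamma> \<Longrightarrow> inK (\<lambda>x. ord_lt x \<gamma>) D I \<Longrightarrow> \<forall>\<sigma>\<in>itr \<gamma>. holds D I \<sigma>"
proof (induction \<gamma> arbitrary: D I rule: wf_induct[OF wf_ord_rel])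
  case (1 \<gamma>)
  have D0: "D \<noteq> {}" and MT: "modelT D I" using inK_modelT[OF "1.prems"(2)] by auto
  show ?case
  proof (cases \<gamma> rule: cases3)
    case 1
    then show ?thesis using T_holds[OF D0] MT fo_closure_holds[OF _ D0] by (simp add: iter_OZ)
  next
    case 2
    define \<beta> where "\<beta> = opred \<gamma>"
    have o: "W \<beta>" "(\<beta>, \<gamma>) \<in> ord_rel" "ord_lt \<beta> \<gamma>" using opred_W "1.prems"(1) 2 \<beta>_def by auto
    have IHb: "\<And>D' I'. inK (\<lambda>x. ord_lt x \<beta>) D' I' \<Longrightarrow> \<forall>\<sigma>\<in>itr \<beta>. holds D' I' \<sigma>"
      using "1.IH" o by blast
    have Kb: "inK (\<lambda>x. ord_le x \<beta>) D I"
      by (rule inK_mono[OF _ "1.prems"(2)]) (use ord_le_lt_trans o(3) in blast)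
    have Kb2: "inK (\<lambda>x. ord_lt x \<beta>) D I"
      by (rule inK_mono[OF _ "1.prems"(2)]) (use ord_lt_trans o(3) in blast)
    have "\<forall>\<psi>\<in>itr \<beta> \<union> pset LL [0] p_U (itr \<beta>). holds D I \<psi>"
      using IHb[OF Kb2] pset_holds[OF o(1) Kb IHb] by blast
    then show ?thesis
      unfolding iter_succ[OF W_nf[OF "1.prems"(1)] 2] jump_def \<beta>_def[symmetric]
      using fo_closure_holds[OF _ D0] by blast
  next
    case 3
    show ?thesis
    proof
      fix \<sigma> assume "\<sigma> \<in> itr \<gamma>"
      then obtain \<beta> where b: "nf \<beta>" "ord_lt \<beta> \<gamma>" "\<sigma> \<in> itr \<beta>"
        using iter_lim[OF W_nf[OF "1.prems"(1)] 3] by auto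
      have wb: "W \<beta>" using W_down "1.prems"(1) b by blast
      have r: "(\<beta>, \<gamma>) \<in> ord_rel" using b W_nf "1.prems"(1) by (simp add: ord_rel_def)
      have Kb: "inK (\<lambda>x. ord_lt x \<beta>) D I"
        by (rule inK_mono[OF _ "1.prems"(2)]) (use ord_lt_trans b(2) in blast)
      show "holds D I \<sigma>" using "1.IH" r wb Kb b(3) by blast
    qed
  qed
qed


lemma negP_sent: "intau s \<Longrightarrow> s \<noteq> [] \<Longrightarrow> sentence LL (Neg (exs [0] (Atom (P s) 0)))"
  by (auto simp: sentence_def in_lang_def exs0 mem_LL_P)

lemma claim: "W \<beta> \<Longrightarrow> intau s \<Longrightarrow> s \<noteq> [] \<Longrightarrow> ord_lt (lb s) \<beta> \<Longrightarrow> Neg (exs [0] (Atom (P s) 0)) \<in> itr \<beta>"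
proof (induction \<beta> arbitrary: s rule: wf_induct[OF wf_ord_rel])
  case (1 \<beta>)
  show ?case
  proof (cases \<beta> rule: cases3)
    case 1 then show ?thesis using "1.prems" by simp
  next
    case 2
    define \<beta>' where "\<beta>' = opred \<beta>"
    have o: "W \<beta>'" "(\<beta>', \<beta>) \<in> ord_rel" "ord_lt \<beta>' \<beta>" using opred_W "1.prems"(1) 2 \<beta>'_def by auto
    have le: "ord_le (lb s) \<beta>'" using succ_le_opred[OF 2 "1.prems"(4)] \<beta>'_def by simp
    have ent: "\<forall>\<chi>\<in>p_U. entails (itr \<beta>') (alls [0] (Imp (Atom (P s) 0) \<chi>))"
    proof
      fix \<chi> assume "\<chi> \<in> p_U"
      then obtain i where \<chi>: "\<chi> = Atom (U i) 0" unfolding p_U_def by blast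
      show "entails (itr \<beta>') (alls [0] (Imp (Atom (P s) 0) \<chi>))"
        unfolding entails_def
      proof (intro allI impI)
        fix D I assume D0: "D \<noteq> {}" and H: "\<forall>\<psi>\<in>itr \<beta>'. holds D I \<psi>"
        have "\<forall>\<psi>\<in>TT. holds D I \<psi>" using H TT_sub[OF o(1)] by blast
        then have MT: "modelT D I" using T_holds[OF D0] by blast
        have "D \<inter> I (P s) \<subseteq> I (U i)"
        proof (cases "intau (s @ [i])")
          case True
          have "ord_lt (lb (s @ [i])) (lb s)" using lab_child_lt[OF True] .
          then have "ord_lt (lb (s @ [i])) \<beta>'" using le ord_lt_le_trans by blast
          then have "Neg (exs [0] (Atom (P (s @ [i])) 0)) \<in> itr \<beta>'"
            using "1.IH" o True by blast
          then have "D \<inter> I (P (s @ [i])) = {}" using H holds_negex[OF D0] by blast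
          then show ?thesis using MT True "1.prems"(3) unfolding modelT_def by blast
        next
          case False
          then have "lb s = OZ" using tau_snoc "1.prems"(2) by blast
          then show ?thesis using MT "1.prems"(2,3) unfolding modelT_def by blast
        qed
        then show "holds D I (alls [0] (Imp (Atom (P s) 0) \<chi>))"
          using holds_ax2[OF D0] \<chi> by (simp add: alls0)
      qed
    qed
    have "in_lang LL (Atom (P s) 0)" using "1.prems" by (simp add: in_lang_def mem_LL_P)
    then have "Neg (exs [0] (Atom (P s) 0)) \<in> pset LL [0] p_U (itr \<beta>')"
      unfolding pset_def using ent by auto
    then show ?thesis
      unfolding iter_succ[OF W_nf[OF "1.prems"(1)] 2] jump_def \<beta>'_def[symmetric] fo_closure_def
      using negP_sent[OF "1.prems"(2,3)] unfolding entails_def by blast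
  next
    case 3
    have nl: "nf (lb s)" using lab_nf "1.prems"(2) .
    obtain i where i: "ord_le (lb s) (f \<beta> i)" using W_cof[OF "1.prems"(1) 3 nl "1.prems"(4)] by blast
    define \<gamma> where "\<gamma> = f \<beta> (Suc i)"
    have g: "nf \<gamma>" "ord_lt \<gamma> \<beta>" using W_lim[OF "1.prems"(1) 3] \<gamma>_def by auto
    have "ord_lt (lb s) \<gamma>" using W_lim[OF "1.prems"(1) 3, of i] i ord_le_lt_trans \<gamma>_def by blast
    moreover have "W \<gamma>" using W_down "1.prems"(1) g by blast
    moreover have "(\<gamma>, \<beta>) \<in> ord_rel" using g W_nf "1.prems"(1) by (simp add: ord_rel_def)
    ultimately have "Neg (exs [0] (Atom (P s) 0)) \<in> itr \<gamma>" using "1.IH" "1.prems"(2,3) by blast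
    then show ?thesis using iter_lim[OF W_nf[OF "1.prems"(1)] 3] g by blast
  qed
qed

lemma finite_bound: "finite S \<Longrightarrow> \<forall>x\<in>S. nf x \<and> ord_lt x \<alpha> \<Longrightarrow> \<alpha> \<noteq> OZ \<Longrightarrow>
    \<exists>\<delta>. nf \<delta> \<and> ord_lt \<delta> \<alpha> \<and> (\<forall>x\<in>S. ord_le x \<delta>)"
proof (induction S rule: finite_induct)
  case empty
  then show ?case by (intro exI[of _ OZ]) (simp add: OZ_lt_iff)
next
  case (insert x S)
  then obtain \<delta> where d: "nf \<delta>" "ord_lt \<delta> \<alpha>" "\<forall>y\<in>S. ord_le y \<delta>" by auto
  show ?case
  proof (cases "ord_lt \<delta> x")
    case True
    then show ?thesis using insert.prems d ord_le_trans by (intro exI[of _ x]) (auto simp: ord_le_def)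
  next
    case False
    then show ?thesis using d by (intro exI[of _ \<delta>]) (auto simp: ord_not_lt)
  qed
qed

lemma all_killed: "\<forall>\<sigma>\<in>itr \<alpha>. holds D I \<sigma> \<Longrightarrow> D \<noteq> {} \<Longrightarrow> inK (\<lambda>x. ord_le x \<alpha>) D I"
proof -
  assume H: "\<forall>\<sigma>\<in>itr \<alpha>. holds D I \<sigma>" and D0: "D \<noteq> {}"
  have "\<forall>\<psi>\<in>TT. holds D I \<psi>" using H TT_sub[OF W\<alpha>] by blast
  then have MT: "modelT D I" using T_holds[OF D0] by blast
  have "\<forall>s. intau s \<and> s \<noteq> [] \<longrightarrow> D \<inter> I (P s) = {}"
  proof (intro allI impI)
    fix s assume s: "intau s \<and> s \<noteq> []"
    then have "Neg (exs [0] (Atom (P s) 0)) \<in> itr \<alpha>" using claim[OF W\<alpha>] lab_lt by blast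
    then show "D \<inter> I (P s) = {}" using H holds_negex[OF D0] by blast
  qed
  then show ?thesis unfolding inK_def using D0 MT by blast
qed

lemma upper: "jump LL [0] p_U (itr \<alpha>) \<subseteq> itr \<alpha>"
proof
  fix \<sigma> assume "\<sigma> \<in> jump LL [0] p_U (itr \<alpha>)"
  then have sent: "sentence LL \<sigma>" and ent: "entails (itr \<alpha> \<union> pset LL [0] p_U (itr \<alpha>)) \<sigma>"
    unfolding jump_def fo_closure_def by auto
  have IHa: "\<And>D' I'. inK (\<lambda>x. ord_lt x \<alpha>) D' I' \<Longrightarrow> \<forall>\<sigma>\<in>itr \<alpha>. holds D' I' \<sigma>"
    using G[OF W\<alpha>] by blast
  have Kall: "\<And>D I. inK (\<lambda>x. ord_le x \<alpha>) D I \<Longrightarrow> holds D I \<sigma>"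
  proof -
    fix D I assume K: "inK (\<lambda>x. ord_le x \<alpha>) D I"
    have K2: "inK (\<lambda>x. ord_lt x \<alpha>) D I" by (rule inK_mono[OF _ K]) (simp add: ord_le_def)
    have D0: "D \<noteq> {}" using inK_modelT[OF K] by blast
    have "\<forall>\<psi>\<in>itr \<alpha> \<union> pset LL [0] p_U (itr \<alpha>). holds D I \<psi>"
      using IHa[OF K2] pset_holds[OF W\<alpha> K IHa] by blast
    then show "holds D I \<sigma>" using ent D0 unfolding entails_def by blast
  qed
  show "\<sigma> \<in> itr \<alpha>"
  proof (cases "is_limit \<alpha>")
    case False
    then have "\<alpha> = OZ \<or> is_succ \<alpha>" using succ_or_limit by blast
    then obtain X where X: "itr \<alpha> = fo_closure LL X"
      using iter_OZ iter_succ[OF W_nf[OF W\<alpha>]] unfolding jump_def by blast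
    have "entails X \<sigma>"
      unfolding entails_def
    proof (intro allI impI)
      fix D I assume D0: "D \<noteq> {}" and H: "\<forall>\<psi>\<in>X. holds D I \<psi>"
      have "\<forall>\<psi>\<in>itr \<alpha>. holds D I \<psi>" using X H fo_closure_holds[OF _ D0] by blast
      then show "holds D I \<sigma>" using all_killed D0 Kall by blast
    qed
    then show ?thesis using X sent unfolding fo_closure_def by blast
  next
    case True
    define AP where "AP = {s. P s \<in> preds \<sigma>}"
    have finAP: "finite AP" unfolding AP_def by (rule finite_vim[OF finite_preds]) (simp add: inj_on_def)
    have AP: "\<And>s. s \<in> AP \<Longrightarrow> intau s \<and> s \<noteq> []"
      using sent mem_LL_P unfolding AP_def sentence_def in_lang_def by blast
    have "\<forall>x\<in>lb ` AP. nf x \<and> ord_lt x \<alpha>" using AP lab_nf lab_lt by blast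
    moreover have "\<alpha> \<noteq> OZ" using True by (simp add: is_limit_def)
    ultimately obtain \<delta> where d: "nf \<delta>" "ord_lt \<delta> \<alpha>" "\<forall>x\<in>lb ` AP. ord_le x \<delta>"
      using finite_bound[of "lb ` AP"] finAP by blast
    define \<gamma> where "\<gamma> = osucc \<delta>"
    have g1: "nf \<gamma>" "is_succ \<gamma>" "opred \<gamma> = \<delta>" using nf_osucc d is_succ_osucc \<gamma>_def by auto
    have "ord_le \<gamma> \<alpha>" using osucc_le d \<gamma>_def by blast
    moreover have "\<gamma> \<noteq> \<alpha>" using g1 True succ_not_limit by blast
    ultimately have g2: "ord_lt \<gamma> \<alpha>" by (simp add: ord_le_def)
    have Wg: "W \<gamma>" using W_down[OF W\<alpha> g1(1) g2] .
    have Wd: "W \<delta>" using W_down[OF W\<alpha> d(1) d(2)] .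
    have sg: "\<sigma> \<in> itr \<gamma>"
    proof -
      have "entails (itr \<delta> \<union> pset LL [0] p_U (itr \<delta>)) \<sigma>"
        unfolding entails_def
      proof (intro allI impI)
        fix D I assume D0: "D \<noteq> {}" and H: "\<forall>\<psi>\<in>itr \<delta> \<union> pset LL [0] p_U (itr \<delta>). holds D I \<psi>"
        have Hg: "\<forall>\<psi>\<in>itr \<gamma>. holds D I \<psi>"
          using H fo_closure_holds[OF _ D0] unfolding iter_succ[OF g1(1,2)] jump_def g1(3) by blast
        have "\<forall>\<psi>\<in>TT. holds D I \<psi>" using Hg TT_sub[OF Wg] by blast
        then have MT: "modelT D I" using T_holds[OF D0] by blast
        have empt: "\<And>s. s \<in> AP \<Longrightarrow> D \<inter> I (P s) = {}"
        proof -
          fix s assume s: "s \<in> AP"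
          have "ord_le (lb s) \<delta>" using d s by blast
          then have "ord_lt (lb s) \<gamma>" using lt_osucc ord_le_lt_trans \<gamma>_def by blast
          then have "Neg (exs [0] (Atom (P s) 0)) \<in> itr \<gamma>" using claim[OF Wg] AP s by blast
          then show "D \<inter> I (P s) = {}" using Hg holds_negex[OF D0] by blast
        qed
        define I0 where "I0 R = (case R of P t \<Rightarrow> {} | U j \<Rightarrow> I (U j))" for R
        have GE0: "\<And>k. GE D I0 k = GE D I k" unfolding GE_def I0_def by simp
        have "modelT D I0" using MT unfolding modelT_def GE0 by (simp add: I0_def)
        then have "inK (\<lambda>x. ord_le x \<alpha>) D I0" unfolding inK_def using D0 by (simp add: I0_def)
        then have h0: "holds D I0 \<sigma>" using Kall by blast
        have "\<forall>R\<in>preds \<sigma>. I R \<inter> D = I0 R \<inter> D"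
        proof
          fix R assume R: "R \<in> preds \<sigma>"
          show "I R \<inter> D = I0 R \<inter> D"
          proof (cases R)
            case (P t)
            then have "t \<in> AP" using R AP_def by simp
            then show ?thesis using empt P by (auto simp: I0_def)
          next
            case (U j) then show ?thesis by (simp add: I0_def)
          qed
        qed
        note rel = this
        show "holds D I \<sigma>" unfolding holds_def
        proof (intro allI impI)
          fix e :: "nat \<Rightarrow> nat" assume r: "range e \<subseteq> D"
          have "sat D I e \<sigma> = sat D I0 e \<sigma>" by (rule sat_relevant[OF rel r])
          then show "sat D I e \<sigma>" using h0 r unfolding holds_def by blast
        qed
      qed
      then show ?thesis
        unfolding iter_succ[OF g1(1,2)] jump_def g1(3) fo_closure_def using sent by blast
    qed
    have "itr \<gamma> \<subseteq> itr \<alpha>" using itr_mono[OF W\<alpha> g1(1)] g2 by (simp add: ord_le_def)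
    then show ?thesis using sg by blast
  qed
qed

lemma itr_sub_fix: "fo_closure LL TT \<subseteq> S \<Longrightarrow> jump LL [0] p_U S \<subseteq> S \<Longrightarrow> W \<gamma> \<Longrightarrow> itr \<gamma> \<subseteq> S"
proof (induction \<gamma> rule: wf_induct[OF wf_ord_rel])
  case (1 \<gamma>)
  show ?case
  proof (cases \<gamma> rule: cases3)
    case 1 then show ?thesis using "1.prems" by (simp add: iter_OZ)
  next
    case 2
    have o: "W (opred \<gamma>)" "(opred \<gamma>, \<gamma>) \<in> ord_rel" using opred_W "1.prems"(3) 2 by auto
    then have "itr (opred \<gamma>) \<subseteq> S" using "1.IH" "1.prems" by blast
    then have "jump LL [0] p_U (itr (opred \<gamma>)) \<subseteq> S" using jump_mono "1.prems"(2) by blast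
    then show ?thesis using iter_succ[OF W_nf[OF "1.prems"(3)] 2] by simp
  next
    case 3
    show ?thesis
    proof
      fix \<sigma> assume "\<sigma> \<in> itr \<gamma>"
      then obtain \<beta> where b: "nf \<beta>" "ord_lt \<beta> \<gamma>" "\<sigma> \<in> itr \<beta>"
        using iter_lim[OF W_nf[OF "1.prems"(3)] 3] by auto
      have "W \<beta>" using W_down "1.prems"(3) b by blast
      moreover have "(\<beta>, \<gamma>) \<in> ord_rel" using b W_nf "1.prems"(3) by (simp add: ord_rel_def)
      ultimately show "\<sigma> \<in> S" using "1.IH" "1.prems"(1,2) b(3) by blast
    qed
  qed
qed

lemma itr_inf: "itr \<alpha> = iter_inf LL [0] p_U TT"
proof
  show "itr \<alpha> \<subseteq> iter_inf LL [0] p_U TT"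
    unfolding iter_inf_def using itr_sub_fix W\<alpha> by blast
  have "fo_closure LL TT \<subseteq> itr \<alpha>" using itr_mono[OF W\<alpha>, of OZ] by (simp add: iter_OZ)
  then show "iter_inf LL [0] p_U TT \<subseteq> itr \<alpha>"
    unfolding iter_inf_def using upper by blast
qed

lemma lower: "nf \<beta> \<Longrightarrow> ord_lt \<beta> \<alpha> \<Longrightarrow> itr \<beta> \<noteq> itr \<alpha>"
proof
  assume nb: "nf \<beta>" and lt: "ord_lt \<beta> \<alpha>" and eq: "itr \<beta> = itr \<alpha>"
  have Wb: "W \<beta>" using W_down[OF W\<alpha> nb lt] .
  have a0: "\<alpha> \<noteq> OZ" using lt by auto
  obtain i where i: "\<not> ord_lt (child f \<alpha> i) \<beta>"
  proof (cases "is_succ \<alpha>")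
    case True
    then have "ord_le \<beta> (child f \<alpha> 0)" using succ_le_opred[OF True lt] by (simp add: child_def)
    then show ?thesis using that ord_not_lt by blast
  next
    case False
    then have "is_limit \<alpha>" using a0 succ_or_limit by blast
    then obtain i where "ord_le \<beta> (f \<alpha> i)" using W_cof[OF W\<alpha> _ nb lt] by blast
    then show ?thesis using that[of i] False ord_not_lt by (simp add: child_def)
  qed
  have ti: "intau [i]" using a0 by (simp add: in_tau_Cons)
  have lbi: "lb [i] = child f \<alpha> i" by simp
  have "Neg (exs [0] (Atom (P [i]) 0)) \<in> itr \<alpha>" using claim[OF W\<alpha> ti] lab_lt[OF ti] by blast
  then have mem: "Neg (exs [0] (Atom (P [i]) 0)) \<in> itr \<beta>" using eq by simp
  define I :: "psym \<Rightarrow> nat set" where "I R = (case R of P t \<Rightarrow> (if t = [i] then {0} else {}) | U j \<Rightarrow> UNIV)" for R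
  have GEU: "GE UNIV I k" for k
    unfolding GE_def I_def by (intro exI[of _ "{0..<k}"]) auto
  have "modelT UNIV I" unfolding modelT_def
  proof (intro conjI)
    show "\<forall>k. GE UNIV I k" using GEU by blast
  qed (simp_all add: I_def)
  moreover have "\<forall>s. intau s \<and> s \<noteq> [] \<and> ord_lt (lb s) \<beta> \<longrightarrow> UNIV \<inter> I (P s) = {}"
    using i by (auto simp: I_def)
  ultimately have K: "inK (\<lambda>x. ord_lt x \<beta>) UNIV I" unfolding inK_def by blast
  have "holds UNIV I (Neg (exs [0] (Atom (P [i]) 0)))" using G[OF Wb K] mem by blast
  then have "UNIV \<inter> I (P [i]) = {}" using holds_negex by blast
  then show False by (simp add: I_def)
qed

theorem rk: "rk_tau_is f \<alpha>"
  unfolding rk_tau_is_def rank_is_def using itr_inf lower by metis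

end

lemma valid_i: "valid_fs_below_omega2 f \<Longrightarrow> validfs f (\<lambda>x. nf x \<and> ord_lt x omega2)"
  unfolding validfs_def valid_fs_below_omega2_def using ord_lt_trans by blast

lemma valid_ii_aux: "nf l \<Longrightarrow> is_limit l \<Longrightarrow> nf (fs_cnf l i) \<and> ord_lt (fs_cnf l i) l \<and> ord_lt (fs_cnf l i) (fs_cnf l (Suc i))"
proof -
  assume h: "nf l" "is_limit l"
  then obtain a b where ab: "l = OP a b" by (cases l) (auto simp: is_limit_def)
  show ?thesis using fs_nf[OF h ab] fs_lt[OF h] fs_inc[OF h] by blast
qed

lemma valid_ii: "validfs fs_cnf nf"
  unfolding validfs_def using valid_ii_aux fs_cof by blast

theorem mainTheorem18:
  shows "(\<forall>f. valid_fs_below_omega2 f \<longrightarrow>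
            (\<forall>\<alpha>. nf \<alpha> \<and> ord_lt \<alpha> omega2 \<longrightarrow> rk_tau_is f \<alpha>))
       \<and> (\<forall>\<alpha>. nf \<alpha> \<longrightarrow> rk_tau_is fs_cnf \<alpha>)"
proof (intro conjI allI impI)
  fix f \<alpha> assume v: "valid_fs_below_omega2 f" and a: "nf \<alpha> \<and> ord_lt \<alpha> omega2"
  interpret setting f "\<lambda>x. nf x \<and> ord_lt x omega2" \<alpha>
    by unfold_locales (use valid_i[OF v] a in auto)
  show "rk_tau_is f \<alpha>" by (rule rk)
next
  fix \<alpha> assume a: "nf \<alpha>"
  interpret setting fs_cnf nf \<alpha>
    by unfold_locales (use valid_ii a in auto)
  show "rk_tau_is fs_cnf \<alpha>" by (rule rk)
qed

end
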